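(* Let $x\in\mathfrak{g}=\mathfrak{gl}(n+1,\mathbb{C})$ satisfy: (1) $x$ is regular nilpotent in $\mathfrak{g}$ and $x_n$ is regular nilpotent in $\mathfrak{g}_n$; and (2) $\mathfrak{z}_{\mathfrak{g}_n}(x_n)\cap\mathfrak{z}_{\mathfrak{g}}(x)=0$. Let $\mathfrak{b}$ be the unique Borel subalgebra of $\mathfrak{g}$ containing $x$. Then $\mathfrak{b}\in Q_{+,n+1}$ or $\mathfrak{b}\in Q_{-,n+1}$.
   Context: $n\ge1$. $\mathfrak{g}_n\cong\mathfrak{gl}(n,\mathbb{C})$ is embedded in $\mathfrak{g}$ as matrices supported in the upper left $n\times n$ corner, $x_n$ is the upper left $n\times n$ submatrix of $x$ (viewed in $\mathfrak{g}_n$), and $\mathfrak{z}$ denotes centralizers. $K_{n+1}=GL(n,\mathbb{C})\times GL(1,\mathbb{C})$ is the group of invertible block diagonal matrices with blocks of sizes $n$ and $1$, acting by conjugation on the flag variety $\mathcal{B}_{n+1}$ of $\mathfrak{g}$. $Q_{+,n+1}$ (resp. $Q_{-,n+1}$) is the $K_{n+1}$-orbit of the Borel subalgebra of upper (resp. lower) triangular matrices. *)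

theory Defs
  imports "Jordan_Normal_Form.Matrix"
begin

definition lie_bracket :: "complex mat \<Rightarrow> complex mat \<Rightarrow> complex mat" where
  "lie_bracket A B = A * B - B * A"

definition lin_comb :: "nat \<Rightarrow> complex list \<Rightarrow> complex mat list \<Rightarrow> complex mat" where
  "lin_comb m cs Ms = foldr (\<lambda>(c, M) acc. c \<cdot>\<^sub>m M + acc) (zip cs Ms) (0\<^sub>m m m)"

definition mat_span :: "nat \<Rightarrow> complex mat set \<Rightarrow> complex mat set" where
  "mat_span m S = {lin_comb m cs Ms | cs Ms. set Ms \<subseteq> S \<and> length cs = length Ms}"

definition lin_indep_mats :: "nat \<Rightarrow> complex mat list \<Rightarrow> bool" where
  "lin_indep_mats m Ms \<longleftrightarrow>
     (\<forall>cs. length cs = length Ms \<and> lin_comb m cs Ms = 0\<^sub>m m m \<longrightarrow> (\<forall>c \<in> set cs. c = 0))"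

definition mat_dim :: "nat \<Rightarrow> complex mat set \<Rightarrow> nat" where
  "mat_dim m V = Max {length Ms | Ms. set Ms \<subseteq> V \<and> lin_indep_mats m Ms}"

definition centralizer :: "nat \<Rightarrow> complex mat \<Rightarrow> complex mat set" where
  "centralizer m x = {y \<in> carrier_mat m m. lie_bracket y x = 0\<^sub>m m m}"

definition nilpotent_mat :: "nat \<Rightarrow> complex mat \<Rightarrow> bool" where
  "nilpotent_mat m x \<longleftrightarrow> x \<in> carrier_mat m m \<and> (\<exists>k. x ^\<^sub>m k = 0\<^sub>m m m)"

text \<open>Regular element of gl(m): dim of centralizer equals the rank m of gl(m).\<close>
definition regular_nilpotent :: "nat \<Rightarrow> complex mat \<Rightarrow> bool" where
  "regular_nilpotent m x \<longleftrightarrow> nilpotent_mat m x \<and> mat_dim m (centralizer m x) = m"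

definition upper_left :: "nat \<Rightarrow> complex mat \<Rightarrow> complex mat" where
  "upper_left n x = mat n n (\<lambda>(i, j). x $$ (i, j))"

definition embed_gl :: "nat \<Rightarrow> complex mat \<Rightarrow> complex mat" where
  "embed_gl n A = mat (Suc n) (Suc n) (\<lambda>(i, j). if i < n \<and> j < n then A $$ (i, j) else 0)"

definition lie_subalgebra :: "nat \<Rightarrow> complex mat set \<Rightarrow> bool" where
  "lie_subalgebra m b \<longleftrightarrow> b \<subseteq> carrier_mat m m \<and> 0\<^sub>m m m \<in> b
     \<and> (\<forall>A\<in>b. \<forall>B\<in>b. A + B \<in> b) \<and> (\<forall>c. \<forall>A\<in>b. c \<cdot>\<^sub>m A \<in> b)
     \<and> (\<forall>A\<in>b. \<forall>B\<in>b. lie_bracket A B \<in> b)"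

fun derived_series :: "nat \<Rightarrow> complex mat set \<Rightarrow> nat \<Rightarrow> complex mat set" where
  "derived_series m b 0 = b"
| "derived_series m b (Suc k) =
     mat_span m {lie_bracket A B | A B. A \<in> derived_series m b k \<and> B \<in> derived_series m b k}"

definition solvable_subalg :: "nat \<Rightarrow> complex mat set \<Rightarrow> bool" where
  "solvable_subalg m b \<longleftrightarrow> lie_subalgebra m b \<and> (\<exists>k. derived_series m b k = {0\<^sub>m m m})"

definition borel_subalg :: "nat \<Rightarrow> complex mat set \<Rightarrow> bool" where
  "borel_subalg m b \<longleftrightarrow> solvable_subalg m b \<and>
     (\<forall>c. solvable_subalg m c \<and> b \<subseteq> c \<longrightarrow> c = b)"

definition upper_borel :: "nat \<Rightarrow> complex mat set" where
  "upper_borel m = {A \<in> carrier_mat m m. \<forall>i j. j < i \<and> i < m \<longrightarrow> A $$ (i, j) = 0}"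

definition lower_borel :: "nat \<Rightarrow> complex mat set" where
  "lower_borel m = {A \<in> carrier_mat m m. \<forall>i j. i < j \<and> j < m \<longrightarrow> A $$ (i, j) = 0}"

text \<open>K_{n+1} = GL(n) x GL(1): invertible block-diagonal (n+1) x (n+1) matrices.\<close>
definition K_grp :: "nat \<Rightarrow> complex mat set" where
  "K_grp n = {k \<in> carrier_mat (Suc n) (Suc n). invertible_mat k \<and>
               (\<forall>i<n. k $$ (i, n) = 0 \<and> k $$ (n, i) = 0)}"

definition K_orbit :: "nat \<Rightarrow> complex mat set \<Rightarrow> complex mat set set" where
  "K_orbit n b = {{k * A * k' | A. A \<in> b} | k k'. k \<in> K_grp n \<and> k' \<in> carrier_mat (Suc n) (Suc n)
                    \<and> k * k' = 1\<^sub>m (Suc n) \<and> k' * k = 1\<^sub>m (Suc n)}"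

definition Q_plus :: "nat \<Rightarrow> complex mat set set" where
  "Q_plus n = K_orbit n (upper_borel (Suc n))"

definition Q_minus :: "nat \<Rightarrow> complex mat set set" where
  "Q_minus n = K_orbit n (lower_borel (Suc n))"

end

theory Submission
  imports Defs "Jordan_Normal_Form.Jordan_Normal_Form_Existence" "Jordan_Normal_Form.VS_Connect"
begin

lemma sq_mult[simp]: "A \<in> carrier_mat m m \<Longrightarrow> B \<in> carrier_mat m m \<Longrightarrow> A * B \<in> carrier_mat m m"
  by (rule mult_carrier_mat)
lemma sq_minus[simp]: "A \<in> carrier_mat m m \<Longrightarrow> B \<in> carrier_mat m m \<Longrightarrow> A - B \<in> carrier_mat m m"
  by (rule minus_carrier_mat)
lemma sq_bracket[simp]: "A \<in> carrier_mat m m \<Longrightarrow> B \<in> carrier_mat m m \<Longrightarrow> lie_bracket A B \<in> carrier_mat m m"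
  unfolding lie_bracket_def by simp

lemma mult_entry: "A \<in> carrier_mat m m \<Longrightarrow> B \<in> carrier_mat m m \<Longrightarrow> i < m \<Longrightarrow> j < m \<Longrightarrow>
  (A * B) $$ (i,j) = (\<Sum>k<m. A $$ (i,k) * B $$ (k,j))"
  by (simp add: scalar_prod_def lessThan_atLeast0)

abbreviation RM :: "nat \<Rightarrow> complex mat ring" where "RM m \<equiv> ring_mat TYPE(complex) m ()"

lemma RM_minus: assumes "A \<in> carrier_mat m m" "B \<in> carrier_mat m m"
  shows "a_minus (RM m) A B = A - B"
proof -
  interpret R: ring "RM m" by (rule ring_mat)
  have "a_inv (RM m) B = - B" 
    by (rule R.minus_equality) (use assms in \<open>simp_all add: ring_mat_simps\<close>)
  thus ?thesis using assms by (simp add: a_minus_def ring_mat_simps minus_add_uminus_mat)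
qed

lemma RM_car: "x \<in> carrier_mat m m \<Longrightarrow> x \<in> carrier (RM m)" by (simp add: ring_mat_simps)

lemma (in ring) jacobi_ring: assumes "x \<in> carrier R" "a \<in> carrier R" "b \<in> carrier R"
  shows "x \<otimes> (a \<otimes> b \<ominus> b \<otimes> a) \<ominus> (a \<otimes> b \<ominus> b \<otimes> a) \<otimes> x
   = ((x \<otimes> a \<ominus> a \<otimes> x) \<otimes> b \<ominus> b \<otimes> (x \<otimes> a \<ominus> a \<otimes> x)) \<oplus> (a \<otimes> (x \<otimes> b \<ominus> b \<otimes> x) \<ominus> (x \<otimes> b \<ominus> b \<otimes> x) \<otimes> a)"
  using assms by algebra

lemma (in ring) br_add_ring: assumes "x \<in> carrier R" "a \<in> carrier R" "b \<in> carrier R"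
  shows "x \<otimes> (a \<oplus> b) \<ominus> (a \<oplus> b) \<otimes> x = (x \<otimes> a \<ominus> a \<otimes> x) \<oplus> (x \<otimes> b \<ominus> b \<otimes> x)"
  using assms by algebra

lemma (in ring) conj_ring: assumes "p \<in> carrier R" "q \<in> carrier R" "a \<in> carrier R" "b \<in> carrier R"
  and qp: "q \<otimes> p = \<one>"
  shows "p \<otimes> (a \<otimes> b \<ominus> b \<otimes> a) \<otimes> q = (p \<otimes> a \<otimes> q) \<otimes> (p \<otimes> b \<otimes> q) \<ominus> (p \<otimes> b \<otimes> q) \<otimes> (p \<otimes> a \<otimes> q)"
proof -
  have h: "q \<otimes> (p \<otimes> x) = x" if "x \<in> carrier R" for x
    using assms that by (simp add: m_assoc[symmetric] qp)
  have e: "(p \<otimes> c \<otimes> q) \<otimes> (p \<otimes> d \<otimes> q) = p \<otimes> (c \<otimes> d) \<otimes> q" if "c \<in> carrier R" "d \<in> carrier R" for c d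
  proof -
    show ?thesis using assms that by (simp add: m_assoc h)
  qed
  have "p \<otimes> (a \<otimes> b \<ominus> b \<otimes> a) \<otimes> q = p \<otimes> (a \<otimes> b) \<otimes> q \<ominus> p \<otimes> (b \<otimes> a) \<otimes> q"
    using assms by algebra
  thus ?thesis using e assms by simp
qed

lemma jacobi: assumes "y \<in> carrier_mat m m" "A \<in> carrier_mat m m" "B \<in> carrier_mat m m"
  shows "lie_bracket y (lie_bracket A B) = lie_bracket (lie_bracket y A) B + lie_bracket A (lie_bracket y B)"
proof -
  interpret R: ring "RM m" by (rule ring_mat)
  note J = R.jacobi_ring[OF RM_car[OF assms(1)] RM_car[OF assms(2)] RM_car[OF assms(3)]]
  show ?thesis using J assms unfolding lie_bracket_def
    by (simp add: ring_mat_simps RM_minus)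
qed

lemma br_add: assumes "y \<in> carrier_mat m m" "A \<in> carrier_mat m m" "B \<in> carrier_mat m m"
  shows "lie_bracket y (A + B) = lie_bracket y A + lie_bracket y B"
proof -
  interpret R: ring "RM m" by (rule ring_mat)
  note J = R.br_add_ring[OF RM_car[OF assms(1)] RM_car[OF assms(2)] RM_car[OF assms(3)]]
  show ?thesis using J assms unfolding lie_bracket_def
    by (simp add: ring_mat_simps RM_minus)
qed

lemma br_smult: assumes "y \<in> carrier_mat m m" "A \<in> carrier_mat m m"
  shows "lie_bracket y (c \<cdot>\<^sub>m A) = c \<cdot>\<^sub>m lie_bracket y A"
  using assms unfolding lie_bracket_def
  by (simp add: mult_smult_distrib[of _ m m _ m] mult_smult_assoc_mat[of _ m m _ m])
     (rule eq_matI, auto simp: algebra_simps)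

lemma br_zero: "y \<in> carrier_mat m m \<Longrightarrow> lie_bracket y (0\<^sub>m m m) = 0\<^sub>m m m"
  unfolding lie_bracket_def by simp

lemma conj_br: assumes "P \<in> carrier_mat m m" "Q \<in> carrier_mat m m" "A \<in> carrier_mat m m" "B \<in> carrier_mat m m"
  and qp: "Q * P = 1\<^sub>m m"
  shows "P * lie_bracket A B * Q = lie_bracket (P * A * Q) (P * B * Q)"
proof -
  interpret R: ring "RM m" by (rule ring_mat)
  note J = R.conj_ring[OF RM_car[OF assms(1)] RM_car[OF assms(2)] RM_car[OF assms(3)] RM_car[OF assms(4)]]
  show ?thesis using J assms unfolding lie_bracket_def
    by (simp add: ring_mat_simps RM_minus)
qed

lemma lin_comb_Nil1[simp]: "lin_comb m [] Ms = 0\<^sub>m m m" by (simp add: lin_comb_def)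
lemma lin_comb_Nil2[simp]: "lin_comb m cs [] = 0\<^sub>m m m" by (simp add: lin_comb_def)
lemma lin_comb_Cons[simp]: "lin_comb m (c#cs) (M#Ms) = c \<cdot>\<^sub>m M + lin_comb m cs Ms"
  by (simp add: lin_comb_def)

lemma lin_comb_carrier[simp]: "set Ms \<subseteq> carrier_mat m m \<Longrightarrow> lin_comb m cs Ms \<in> carrier_mat m m"
proof (induct Ms arbitrary: cs)
  case Nil thus ?case by simp
next
  case (Cons M Ms) thus ?case by (cases cs) auto
qed

lemma lin_comb_dims[simp]: "set Ms \<subseteq> carrier_mat m m \<Longrightarrow> dim_row (lin_comb m cs Ms) = m"
  "set Ms \<subseteq> carrier_mat m m \<Longrightarrow> dim_col (lin_comb m cs Ms) = m"
  using carrier_matD[OF lin_comb_carrier[of Ms m cs]] by auto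

lemma lin_comb_index: assumes "set Ms \<subseteq> carrier_mat m m" "length cs = length Ms" "i < m" "j < m"
  shows "lin_comb m cs Ms $$ (i,j) = (\<Sum>l<length Ms. cs!l * Ms!l $$ (i,j))"
  using assms
proof (induct Ms arbitrary: cs)
  case Nil thus ?case by simp
next
  case (Cons M Ms)
  then obtain c cs' where cs: "cs = c # cs'" by (cases cs) auto
  have "lin_comb m cs (M#Ms) $$ (i,j) = c * M $$ (i,j) + lin_comb m cs' Ms $$ (i,j)"
    using Cons.prems cs by (auto simp: carrier_matD)
  also have "\<dots> = c * M $$ (i,j) + (\<Sum>l<length Ms. cs'!l * Ms!l $$ (i,j))"
    using Cons cs by simp
  also have "\<dots> = (\<Sum>l<length (M#Ms). cs!l * (M#Ms)!l $$ (i,j))"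
    unfolding cs length_Cons sum.lessThan_Suc_shift by simp
  finally show ?case .
qed

lemma sum_single: "finite A \<Longrightarrow> a \<in> A \<Longrightarrow> (\<And>x. x \<in> A \<Longrightarrow> x \<noteq> a \<Longrightarrow> f x = 0) \<Longrightarrow> sum f A = f a"
  by (subst sum.remove[of A a]) (auto intro!: sum.neutral)

lemma lin_indep_witness: assumes car: "set Ms \<subseteq> carrier_mat m m"
  and wit: "\<And>l. l < length Ms \<Longrightarrow> \<exists>i j. i < m \<and> j < m \<and> Ms!l $$ (i,j) \<noteq> 0 \<and>
     (\<forall>l'<length Ms. l' \<noteq> l \<longrightarrow> Ms!l' $$ (i,j) = 0)"
  shows "lin_indep_mats m Ms"
  unfolding lin_indep_mats_def
proof (intro allI impI ballI)
  fix cs c assume h: "length cs = length Ms \<and> lin_comb m cs Ms = 0\<^sub>m m m" and c: "c \<in> set cs"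
  then obtain l where l: "l < length cs" "c = cs!l" by (auto simp: in_set_conv_nth)
  obtain i j where ij: "i < m" "j < m" "Ms!l $$ (i,j) \<noteq> 0"
    "\<forall>l'<length Ms. l' \<noteq> l \<longrightarrow> Ms!l' $$ (i,j) = 0" using wit[of l] l h by auto
  have "(\<Sum>l'<length Ms. cs!l' * Ms!l' $$ (i,j)) = lin_comb m cs Ms $$ (i,j)"
    by (rule lin_comb_index[OF car, symmetric]) (use h ij in auto)
  hence "0 = (\<Sum>l'<length Ms. cs!l' * Ms!l' $$ (i,j))" using h ij by simp
  also have "\<dots> = cs!l * Ms!l $$ (i,j)" by (rule sum_single) (use l h ij in auto)
  finally show "c = 0" using ij l by simp
qed

lemma lin_comb_append: assumes "length cs1 = length Ms1" "set Ms1 \<subseteq> carrier_mat m m" "set Ms2 \<subseteq> carrier_mat m m"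
  shows "lin_comb m (cs1 @ cs2) (Ms1 @ Ms2) = lin_comb m cs1 Ms1 + lin_comb m cs2 Ms2"
  using assms
proof (induct Ms1 arbitrary: cs1)
  case Nil thus ?case by simp
next
  case (Cons M Ms)
  then obtain c cs' where cs: "cs1 = c # cs'" by (cases cs1) auto
  show ?case using Cons cs by (simp add: assoc_add_mat[of _ m m])
qed

lemma smult_smult_mat: "(a::complex) \<cdot>\<^sub>m (c \<cdot>\<^sub>m M) = (a * c) \<cdot>\<^sub>m M"
  by (rule eq_matI) (auto simp: mult.assoc)

lemma lin_comb_smult: "set Ms \<subseteq> carrier_mat m m \<Longrightarrow> a \<cdot>\<^sub>m lin_comb m cs Ms = lin_comb m (map ((*) a) cs) Ms"
proof (induct Ms arbitrary: cs)
  case Nil thus ?case by simp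
next
  case (Cons M Ms) thus ?case 
    by (cases cs) (auto simp: add_smult_distrib_left_mat[of _ m m] smult_smult_mat)
qed

lemma lin_comb_map: assumes f_car: "\<And>A. A \<in> carrier_mat m m \<Longrightarrow> f A \<in> carrier_mat m' m'"
  and f_lin: "\<And>c A B. A \<in> carrier_mat m m \<Longrightarrow> B \<in> carrier_mat m m \<Longrightarrow> f (c \<cdot>\<^sub>m A + B) = c \<cdot>\<^sub>m f A + f B"
  and f0: "f (0\<^sub>m m m) = 0\<^sub>m m' m'"
  shows "set Ms \<subseteq> carrier_mat m m \<Longrightarrow> f (lin_comb m cs Ms) = lin_comb m' cs (map f Ms)"
proof (induct Ms arbitrary: cs)
  case Nil thus ?case using f0 by simp
next
  case (Cons M Ms) thus ?case using f0 f_lin by (cases cs) auto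
qed

definition subsp :: "nat \<Rightarrow> complex mat set \<Rightarrow> bool" where
  "subsp m T \<longleftrightarrow> T \<subseteq> carrier_mat m m \<and> 0\<^sub>m m m \<in> T \<and> (\<forall>A\<in>T. \<forall>B\<in>T. A + B \<in> T)
     \<and> (\<forall>c. \<forall>A\<in>T. c \<cdot>\<^sub>m A \<in> T)"

lemma lin_comb_in_subsp: "subsp m T \<Longrightarrow> set Ms \<subseteq> T \<Longrightarrow> lin_comb m cs Ms \<in> T"
proof (induct Ms arbitrary: cs)
  case Nil thus ?case by (simp add: subsp_def)
next
  case (Cons M Ms) thus ?case by (cases cs) (auto simp: subsp_def)
qed

lemma span_subsp: assumes "S \<subseteq> carrier_mat m m" shows "subsp m (mat_span m S)"
  unfolding subsp_def
proof (intro conjI ballI allI)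
  show "mat_span m S \<subseteq> carrier_mat m m" using assms unfolding mat_span_def by auto
  show "0\<^sub>m m m \<in> mat_span m S" unfolding mat_span_def
    by (rule CollectI, rule exI[of _ "[]"], rule exI[of _ "[]"]) simp
next
  fix A B assume "A \<in> mat_span m S" "B \<in> mat_span m S"
  then obtain cs1 Ms1 cs2 Ms2 where A: "A = lin_comb m cs1 Ms1" "set Ms1 \<subseteq> S" "length cs1 = length Ms1"
    and B: "B = lin_comb m cs2 Ms2" "set Ms2 \<subseteq> S" "length cs2 = length Ms2"
    unfolding mat_span_def by blast
  have "A + B = lin_comb m (cs1 @ cs2) (Ms1 @ Ms2)" using A B assms
    by (subst lin_comb_append) auto
  thus "A + B \<in> mat_span m S" unfolding mat_span_def using A B by fastforce
next
  fix c A assume "A \<in> mat_span m S"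
  then obtain cs1 Ms1 where A: "A = lin_comb m cs1 Ms1" "set Ms1 \<subseteq> S" "length cs1 = length Ms1"
    unfolding mat_span_def by blast
  have "c \<cdot>\<^sub>m A = lin_comb m (map ((*) c) cs1) Ms1" using A assms by (simp add: lin_comb_smult)
  thus "c \<cdot>\<^sub>m A \<in> mat_span m S" unfolding mat_span_def using A by fastforce
qed

lemma span_base: assumes "S \<subseteq> carrier_mat m m" "M \<in> S" shows "M \<in> mat_span m S"
proof -
  have "lin_comb m [1] [M] = M" using assms by (intro eq_matI) (auto simp: carrier_matD)
  thus ?thesis unfolding mat_span_def using assms(2) by (metis (mono_tags, lifting) CollectI empty_subsetI
       insert_subset length_Cons list.set(1,2) list.size(3))
qed

lemma span_least: "subsp m T \<Longrightarrow> S \<subseteq> T \<Longrightarrow> mat_span m S \<subseteq> T"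
  unfolding mat_span_def using lin_comb_in_subsp by blast

lemma lie_sub_subsp: "lie_subalgebra m b \<Longrightarrow> subsp m b"
  unfolding lie_subalgebra_def subsp_def by auto

lemma ds_subsp: "lie_subalgebra m b \<Longrightarrow> subsp m (derived_series m b i)"
proof (induct i)
  case 0 thus ?case by (simp add: lie_sub_subsp)
next
  case (Suc i)
  hence "derived_series m b i \<subseteq> carrier_mat m m" by (simp add: subsp_def)
  hence "{lie_bracket A B | A B. A \<in> derived_series m b i \<and> B \<in> derived_series m b i} \<subseteq> carrier_mat m m"
    using sq_bracket by blast
  thus ?case by (simp add: span_subsp)
qed

lemma ds_carrier: "lie_subalgebra m b \<Longrightarrow> derived_series m b i \<subseteq> carrier_mat m m"
  using ds_subsp[of m b i] by (simp add: subsp_def)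

lemma ds_zero: "lie_subalgebra m b \<Longrightarrow> 0\<^sub>m m m \<in> derived_series m b i"
  using ds_subsp[of m b i] by (simp add: subsp_def)

lemma ds_bracket: assumes "lie_subalgebra m b" "A \<in> derived_series m b i" "B \<in> derived_series m b i"
  shows "lie_bracket A B \<in> derived_series m b (Suc i)"
proof -
  have "{lie_bracket A B | A B. A \<in> derived_series m b i \<and> B \<in> derived_series m b i} \<subseteq> carrier_mat m m"
    using ds_carrier[OF assms(1), of i] sq_bracket by blast
  thus ?thesis using assms by (auto intro!: span_base)
qed

lemma ds_ad: assumes L: "lie_subalgebra m b" and y: "y \<in> b"
  shows "z \<in> derived_series m b i \<Longrightarrow> lie_bracket y z \<in> derived_series m b i"
proof (induct i arbitrary: z)
  case 0 thus ?case using L y by (simp add: lie_subalgebra_def)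
next
  case (Suc i)
  have yc: "y \<in> carrier_mat m m" using L y by (auto simp: lie_subalgebra_def)
  let ?D = "derived_series m b (Suc i)"
  let ?T = "{z \<in> carrier_mat m m. lie_bracket y z \<in> ?D}"
  have sD: "subsp m ?D" using ds_subsp[OF L] .
  have "subsp m ?T" unfolding subsp_def
  proof (intro conjI ballI allI)
    show "?T \<subseteq> carrier_mat m m" by auto
    show "0\<^sub>m m m \<in> ?T" using br_zero[OF yc] sD by (simp add: subsp_def)
  next
    fix A B assume "A \<in> ?T" "B \<in> ?T"
    thus "A + B \<in> ?T" using br_add[OF yc] sD by (auto simp: subsp_def)
  next
    fix c A assume "A \<in> ?T"
    thus "c \<cdot>\<^sub>m A \<in> ?T" using br_smult[OF yc] sD by (auto simp: subsp_def)
  qed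
  moreover have "{lie_bracket A B | A B. A \<in> derived_series m b i \<and> B \<in> derived_series m b i} \<subseteq> ?T"
  proof safe
    fix A B assume A: "A \<in> derived_series m b i" and B: "B \<in> derived_series m b i"
    have Ac: "A \<in> carrier_mat m m" and Bc: "B \<in> carrier_mat m m" using A B ds_carrier[OF L] by auto
    show "lie_bracket A B \<in> carrier_mat m m" using Ac Bc by simp
    have "lie_bracket y (lie_bracket A B) = lie_bracket (lie_bracket y A) B + lie_bracket A (lie_bracket y B)"
      by (rule jacobi[OF yc Ac Bc])
    moreover have "lie_bracket (lie_bracket y A) B \<in> ?D" by (rule ds_bracket[OF L Suc(1)[OF A] B])
    moreover have "lie_bracket A (lie_bracket y B) \<in> ?D" by (rule ds_bracket[OF L A Suc(1)[OF B]])
    ultimately show "lie_bracket y (lie_bracket A B) \<in> ?D" using sD by (simp add: subsp_def)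
  qed
  ultimately have "?D \<subseteq> ?T" by (simp add: span_least)
  thus ?case using Suc(2) by auto
qed



lemma map_obtain: "set Ms \<subseteq> f ` S \<Longrightarrow> \<exists>Ns. Ms = map f Ns \<and> set Ns \<subseteq> S"
proof (induct Ms)
  case Nil thus ?case by simp
next
  case (Cons M Ms)
  then obtain N Ns where "M = f N" "N \<in> S" "Ms = map f Ns" "set Ns \<subseteq> S" by auto
  thus ?case by (intro exI[of _ "N # Ns"]) auto
qed

context
  fixes m :: nat and P Q :: "complex mat"
  assumes P: "P \<in> carrier_mat m m" and Q: "Q \<in> carrier_mat m m" and QP: "Q * P = 1\<^sub>m m"
begin

lemma cj_car: "A \<in> carrier_mat m m \<Longrightarrow> P * A * Q \<in> carrier_mat m m"
  using P Q by simp

lemma cj_lin: assumes A: "A \<in> carrier_mat m m" and B: "B \<in> carrier_mat m m"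
  shows "P * (c \<cdot>\<^sub>m A + B) * Q = c \<cdot>\<^sub>m (P * A * Q) + P * B * Q"
proof -
  have "P * (c \<cdot>\<^sub>m A + B) = P * (c \<cdot>\<^sub>m A) + P * B"
    by (rule mult_add_distrib_mat[of P m m "c \<cdot>\<^sub>m A" m B]) (use P A B in auto)
  also have "P * (c \<cdot>\<^sub>m A) = c \<cdot>\<^sub>m (P * A)" by (rule mult_smult_distrib[of P m m A m]) (use P A in auto)
  finally have 1: "P * (c \<cdot>\<^sub>m A + B) = c \<cdot>\<^sub>m (P * A) + P * B" .
  have "(c \<cdot>\<^sub>m (P * A) + P * B) * Q = (c \<cdot>\<^sub>m (P * A)) * Q + (P * B) * Q"
    by (rule add_mult_distrib_mat[of _ m m _ Q m]) (use P A B Q in auto)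
  also have "(c \<cdot>\<^sub>m (P * A)) * Q = c \<cdot>\<^sub>m (P * A * Q)" 
    by (rule mult_smult_assoc_mat[of "P * A" m m Q m]) (use P A Q in auto)
  finally show ?thesis using 1 by simp
qed

lemma cj_zero: "P * 0\<^sub>m m m * Q = 0\<^sub>m m m"
  using P Q by simp

lemma cj_lin_comb: "set Ms \<subseteq> carrier_mat m m \<Longrightarrow> P * lin_comb m cs Ms * Q = lin_comb m cs (map (\<lambda>A. P * A * Q) Ms)"
  by (rule lin_comb_map[of m "\<lambda>A. P * A * Q" m]) (auto simp: cj_car cj_lin cj_zero)

lemma span_image: assumes S: "S \<subseteq> carrier_mat m m"
  shows "mat_span m ((\<lambda>A. P * A * Q) ` S) = (\<lambda>A. P * A * Q) ` mat_span m S"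
proof
  show "mat_span m ((\<lambda>A. P * A * Q) ` S) \<subseteq> (\<lambda>A. P * A * Q) ` mat_span m S"
  proof
    fix X assume "X \<in> mat_span m ((\<lambda>A. P * A * Q) ` S)"
    then obtain cs Ms where X: "X = lin_comb m cs Ms" "set Ms \<subseteq> (\<lambda>A. P * A * Q) ` S" "length cs = length Ms"
      unfolding mat_span_def by blast
    obtain Ns where Ns: "Ms = map (\<lambda>A. P * A * Q) Ns" "set Ns \<subseteq> S" using map_obtain[OF X(2)] by blast
    have "X = P * lin_comb m cs Ns * Q" using X Ns S by (simp add: cj_lin_comb)
    moreover have "lin_comb m cs Ns \<in> mat_span m S" unfolding mat_span_def using Ns X by auto
    ultimately show "X \<in> (\<lambda>A. P * A * Q) ` mat_span m S" by blast
  qed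
next
  show "(\<lambda>A. P * A * Q) ` mat_span m S \<subseteq> mat_span m ((\<lambda>A. P * A * Q) ` S)"
  proof
    fix X assume "X \<in> (\<lambda>A. P * A * Q) ` mat_span m S"
    then obtain cs Ns where X: "X = P * lin_comb m cs Ns * Q" "set Ns \<subseteq> S" "length cs = length Ns"
      unfolding mat_span_def by blast
    have "X = lin_comb m cs (map (\<lambda>A. P * A * Q) Ns)" using X S by (simp add: cj_lin_comb)
    hence "X = lin_comb m cs (map (\<lambda>A. P * A * Q) Ns) \<and> set (map (\<lambda>A. P * A * Q) Ns) \<subseteq> (\<lambda>A. P * A * Q) ` S
       \<and> length cs = length (map (\<lambda>A. P * A * Q) Ns)" using X by auto
    thus "X \<in> mat_span m ((\<lambda>A. P * A * Q) ` S)" unfolding mat_span_def by blast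
  qed
qed

lemma ds_conj: assumes L: "lie_subalgebra m b"
  shows "derived_series m ((\<lambda>A. P * A * Q) ` b) i = (\<lambda>A. P * A * Q) ` derived_series m b i"
proof (induct i)
  case 0 thus ?case by simp
next
  case (Suc i)
  let ?f = "\<lambda>A. P * A * Q"
  let ?D = "derived_series m b i"
  have Dc: "?D \<subseteq> carrier_mat m m" by (rule ds_carrier[OF L])
  have key: "lie_bracket (?f A) (?f B) = ?f (lie_bracket A B)" if "A \<in> ?D" "B \<in> ?D" for A B
  proof -
    have "A \<in> carrier_mat m m" "B \<in> carrier_mat m m" using Dc that by auto
    thus ?thesis using conj_br[OF P Q _ _ QP] by simp
  qed
  have "{lie_bracket A B | A B. A \<in> ?f ` ?D \<and> B \<in> ?f ` ?D} = ?f ` {lie_bracket A B | A B. A \<in> ?D \<and> B \<in> ?D}"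
  proof (intro equalityI subsetI)
    fix X assume "X \<in> {lie_bracket A B | A B. A \<in> ?f ` ?D \<and> B \<in> ?f ` ?D}"
    then obtain A B where AB: "X = lie_bracket (?f A) (?f B)" "A \<in> ?D" "B \<in> ?D" by blast
    hence "X = ?f (lie_bracket A B)" using key by simp
    thus "X \<in> ?f ` {lie_bracket A B | A B. A \<in> ?D \<and> B \<in> ?D}" using AB by blast
  next
    fix X assume "X \<in> ?f ` {lie_bracket A B | A B. A \<in> ?D \<and> B \<in> ?D}"
    then obtain A B where AB: "X = ?f (lie_bracket A B)" "A \<in> ?D" "B \<in> ?D" by blast
    hence "X = lie_bracket (?f A) (?f B)" using key by simp
    thus "X \<in> {lie_bracket A B | A B. A \<in> ?f ` ?D \<and> B \<in> ?f ` ?D}" using AB by blast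
  qed
  moreover have "{lie_bracket A B | A B. A \<in> ?D \<and> B \<in> ?D} \<subseteq> carrier_mat m m"
    using Dc sq_bracket by blast
  ultimately show ?case using Suc by (simp add: span_image)
qed

lemma one_smult_m: "(1::complex) \<cdot>\<^sub>m X = X"
  by (rule eq_matI) auto

lemma lie_sub_conj: assumes L: "lie_subalgebra m b" shows "lie_subalgebra m ((\<lambda>A. P * A * Q) ` b)"
proof -
  have bc: "b \<subseteq> carrier_mat m m" using L by (simp add: lie_subalgebra_def)
  have b0: "0\<^sub>m m m \<in> b" using L by (simp add: lie_subalgebra_def)
  have badd: "A + B \<in> b" if "A \<in> b" "B \<in> b" for A B using L that by (simp add: lie_subalgebra_def)
  have bsm: "c \<cdot>\<^sub>m A \<in> b" if "A \<in> b" for A c using L that by (simp add: lie_subalgebra_def)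
  have bbr: "lie_bracket A B \<in> b" if "A \<in> b" "B \<in> b" for A B using L that by (simp add: lie_subalgebra_def)
  show ?thesis unfolding lie_subalgebra_def
  proof (intro conjI ballI allI)
    show "(\<lambda>A. P * A * Q) ` b \<subseteq> carrier_mat m m" using bc cj_car by blast
    have "P * 0\<^sub>m m m * Q \<in> (\<lambda>A. P * A * Q) ` b" using b0 by blast
    thus "0\<^sub>m m m \<in> (\<lambda>A. P * A * Q) ` b" using cj_zero by simp
  next
    fix A B assume "A \<in> (\<lambda>A. P * A * Q) ` b" "B \<in> (\<lambda>A. P * A * Q) ` b"
    then obtain A' B' where AB: "A = P * A' * Q" "B = P * B' * Q" "A' \<in> b" "B' \<in> b" by blast
    have c: "A' \<in> carrier_mat m m" "B' \<in> carrier_mat m m" using AB bc by auto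
    have "P * (1 \<cdot>\<^sub>m A' + B') * Q = 1 \<cdot>\<^sub>m (P * A' * Q) + P * B' * Q" by (rule cj_lin[OF c])
    hence "A + B = P * (1 \<cdot>\<^sub>m A' + B') * Q" using AB by (simp add: one_smult_m)
    moreover have "1 \<cdot>\<^sub>m A' + B' \<in> b" using AB by (simp add: badd bsm)
    ultimately show "A + B \<in> (\<lambda>A. P * A * Q) ` b" by blast
    have "lie_bracket A B = P * lie_bracket A' B' * Q" using conj_br[OF P Q c QP] AB by simp
    moreover have "lie_bracket A' B' \<in> b" using AB by (simp add: bbr)
    ultimately show "lie_bracket A B \<in> (\<lambda>A. P * A * Q) ` b" by blast
  next
    fix c A assume "A \<in> (\<lambda>A. P * A * Q) ` b"
    then obtain A' where AB: "A = P * A' * Q" "A' \<in> b" by blast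
    have ca: "A' \<in> carrier_mat m m" using AB bc by auto
    have "P * (c \<cdot>\<^sub>m A' + 0\<^sub>m m m) * Q = c \<cdot>\<^sub>m (P * A' * Q) + P * 0\<^sub>m m m * Q"
      by (rule cj_lin[OF ca zero_carrier_mat])
    also have "\<dots> = c \<cdot>\<^sub>m (P * A' * Q)" using cj_zero cj_car[OF ca] by simp
    finally have "c \<cdot>\<^sub>m A = P * (c \<cdot>\<^sub>m A' + 0\<^sub>m m m) * Q" using AB by simp
    moreover have "c \<cdot>\<^sub>m A' + 0\<^sub>m m m \<in> b" using AB by (simp add: badd bsm b0)
    ultimately show "c \<cdot>\<^sub>m A \<in> (\<lambda>A. P * A * Q) ` b" by blast
  qed
qed

lemma solv_conj: assumes "solvable_subalg m b" shows "solvable_subalg m ((\<lambda>A. P * A * Q) ` b)"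
proof -
  from assms obtain k where L: "lie_subalgebra m b" and k: "derived_series m b k = {0\<^sub>m m m}"
    unfolding solvable_subalg_def by blast
  have "derived_series m ((\<lambda>A. P * A * Q) ` b) k = {0\<^sub>m m m}" using ds_conj[OF L, of k] k cj_zero by simp
  thus ?thesis unfolding solvable_subalg_def using lie_sub_conj[OF L] by blast
qed

end



section \<open>Upper triangular matrices form a solvable subalgebra\<close>

definition Nd :: "nat \<Rightarrow> nat \<Rightarrow> complex mat set" where
  "Nd m d = {A \<in> carrier_mat m m. \<forall>i j. i < m \<longrightarrow> j < m \<longrightarrow> j < i + d \<longrightarrow> A $$ (i,j) = 0}"

lemma Nd_subsp: "subsp m (Nd m d)"
  unfolding subsp_def Nd_def by auto

lemma mult_entry_single: assumes "X \<in> carrier_mat m m" "Y \<in> carrier_mat m m" "i < m" "j < m" "k0 < m"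
  "\<And>k. k < m \<Longrightarrow> k \<noteq> k0 \<Longrightarrow> X $$ (i,k) * Y $$ (k,j) = 0"
  shows "(X * Y) $$ (i,j) = X $$ (i,k0) * Y $$ (k0,j)"
proof -
  have "(X * Y) $$ (i,j) = (\<Sum>k<m. X $$ (i,k) * Y $$ (k,j))" by (rule mult_entry) (use assms in auto)
  also have "\<dots> = X $$ (i,k0) * Y $$ (k0,j)" by (rule sum_single) (use assms in auto)
  finally show ?thesis .
qed

lemma mult_entry_zero: assumes "X \<in> carrier_mat m m" "Y \<in> carrier_mat m m" "i < m" "j < m"
  "\<And>k. k < m \<Longrightarrow> X $$ (i,k) * Y $$ (k,j) = 0"
  shows "(X * Y) $$ (i,j) = 0"
proof -
  have "(X * Y) $$ (i,j) = (\<Sum>k<m. X $$ (i,k) * Y $$ (k,j))" by (rule mult_entry) (use assms in auto)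
  also have "\<dots> = 0" by (rule sum.neutral) (use assms in auto)
  finally show ?thesis .
qed

lemma Nd_mult_entry: assumes A: "A \<in> Nd m d" and B: "B \<in> Nd m e" and ij: "i < m" "j < m" "j \<le> i + d + e"
  shows "(A * B) $$ (i,j) = (if j = i + d + e then A $$ (i, i + d) * B $$ (i + d, j) else 0)"
proof -
  have Ac: "A \<in> carrier_mat m m" and Bc: "B \<in> carrier_mat m m" using A B by (auto simp: Nd_def)
  have z: "A $$ (i,k) * B $$ (k,j) = 0" if "k < m" "k \<noteq> i + d" for k
  proof (cases "k < i + d")
    case True thus ?thesis using A ij that by (auto simp: Nd_def)
  next
    case False hence "j < k + e" using that ij by auto
    thus ?thesis using B ij that by (auto simp: Nd_def)
  qed
  show ?thesis
  proof (cases "j = i + d + e")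
    case True
    thus ?thesis using mult_entry_single[OF Ac Bc ij(1,2), of "i + d"] z ij by auto
  next
    case False
    have "A $$ (i,k) * B $$ (k,j) = 0" if "k < m" for k
    proof (cases "k = i + d")
      case True thus ?thesis using B ij that False by (auto simp: Nd_def)
    qed (use z that in auto)
    thus ?thesis using mult_entry_zero[OF Ac Bc ij(1,2)] False by auto
  qed
qed

lemma Nd_mult: assumes A: "A \<in> Nd m d" and B: "B \<in> Nd m e" shows "A * B \<in> Nd m (d + e)"
proof -
  have Ac: "A \<in> carrier_mat m m" and Bc: "B \<in> carrier_mat m m" using A B by (auto simp: Nd_def)
  show ?thesis unfolding Nd_def using Nd_mult_entry[OF A B] Ac Bc by auto
qed

lemma Nd_bracket: assumes A: "A \<in> Nd m d" and B: "B \<in> Nd m d" shows "lie_bracket A B \<in> Nd m (Suc d)"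
proof -
  have Ac: "A \<in> carrier_mat m m" and Bc: "B \<in> carrier_mat m m" using A B by (auto simp: Nd_def)
  { fix i j assume ij: "i < m" "j < m" "j < i + Suc d"
    have "(A * B) $$ (i,j) = (B * A) $$ (i,j)"
      using Nd_mult_entry[OF A B ij(1,2)] Nd_mult_entry[OF B A ij(1,2)] ij by auto
    hence "lie_bracket A B $$ (i,j) = 0" using ij Ac Bc unfolding lie_bracket_def by simp }
  thus ?thesis unfolding Nd_def lie_bracket_def using Ac Bc by auto
qed

lemma upper_Nd0: "upper_borel m = Nd m 0"
  unfolding upper_borel_def Nd_def by auto

lemma ds_U: "derived_series m (upper_borel m) i \<subseteq> Nd m i"
proof (induct i)
  case 0 thus ?case by (simp add: upper_Nd0)
next
  case (Suc i)
  have "{lie_bracket A B | A B. A \<in> derived_series m (upper_borel m) i \<and> B \<in> derived_series m (upper_borel m) i}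
     \<subseteq> Nd m (Suc i)" using Suc Nd_bracket by blast
  thus ?case by (simp add: span_least Nd_subsp)
qed

lemma U_lie: "lie_subalgebra m (upper_borel m)"
  unfolding lie_subalgebra_def upper_Nd0
proof (intro conjI ballI allI)
  show "Nd m 0 \<subseteq> carrier_mat m m" "0\<^sub>m m m \<in> Nd m 0" by (auto simp: Nd_def)
  fix A B assume "A \<in> Nd m 0" "B \<in> Nd m 0"
  thus "A + B \<in> Nd m 0" using Nd_subsp[of m 0] by (simp add: subsp_def)
  have "A * B \<in> Nd m 0" "B * A \<in> Nd m 0" using Nd_mult[OF \<open>A \<in> Nd m 0\<close> \<open>B \<in> Nd m 0\<close>]
      Nd_mult[OF \<open>B \<in> Nd m 0\<close> \<open>A \<in> Nd m 0\<close>] by auto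
  moreover have "A \<in> carrier_mat m m" "B \<in> carrier_mat m m" using \<open>A \<in> Nd m 0\<close> \<open>B \<in> Nd m 0\<close>
    by (auto simp: Nd_def)
  ultimately show "lie_bracket A B \<in> Nd m 0" unfolding lie_bracket_def 
    by (auto simp: Nd_def carrier_matD)
next
  fix c A assume "A \<in> Nd m 0" thus "c \<cdot>\<^sub>m A \<in> Nd m 0" using Nd_subsp[of m 0] by (simp add: subsp_def)
qed

lemma U_solv: "solvable_subalg m (upper_borel m)"
proof -
  have "derived_series m (upper_borel m) m \<subseteq> {0\<^sub>m m m}"
    using ds_U[of m m] by (auto simp: Nd_def intro!: eq_matI)
  moreover have "0\<^sub>m m m \<in> derived_series m (upper_borel m) m" by (rule ds_zero[OF U_lie])
  ultimately show ?thesis unfolding solvable_subalg_def using U_lie by blast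
qed



section \<open>A solvable subalgebra containing the principal nilpotent is upper triangular\<close>

abbreviation JJ :: "nat \<Rightarrow> complex mat" where "JJ m \<equiv> jordan_block m 0"

lemma JJ_mult_l: assumes A: "A \<in> carrier_mat m m" and ij: "i < m" "j < m"
  shows "(JJ m * A) $$ (i,j) = (if Suc i < m then A $$ (Suc i, j) else 0)"
proof (cases "Suc i < m")
  case True
  have "(JJ m * A) $$ (i,j) = JJ m $$ (i, Suc i) * A $$ (Suc i, j)"
    by (rule mult_entry_single) (use assms True in auto)
  thus ?thesis using True assms by simp
next
  case False
  have "(JJ m * A) $$ (i,j) = 0" by (rule mult_entry_zero) (use assms False in auto)
  thus ?thesis using False by simp
qed

lemma JJ_mult_r: assumes A: "A \<in> carrier_mat m m" and ij: "i < m" "j < m"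
  shows "(A * JJ m) $$ (i,j) = (if 0 < j then A $$ (i, j - 1) else 0)"
proof (cases "0 < j")
  case True
  have "(A * JJ m) $$ (i,j) = A $$ (i, j - 1) * JJ m $$ (j - 1, j)"
    by (rule mult_entry_single) (use assms True in \<open>auto split: if_splits\<close>)
  thus ?thesis using True assms by simp
next
  case False
  have "(A * JJ m) $$ (i,j) = 0" by (rule mult_entry_zero) (use assms False in \<open>auto split: if_splits\<close>)
  thus ?thesis using False by simp
qed

lemma br_JJ: assumes A: "A \<in> carrier_mat m m" and ij: "i < m" "j < m"
  shows "lie_bracket (JJ m) A $$ (i,j) = (if Suc i < m then A $$ (Suc i, j) else 0) - (if 0 < j then A $$ (i, j - 1) else 0)"
proof -
  have "lie_bracket (JJ m) A $$ (i,j) = (JJ m * A) $$ (i,j) - (A * JJ m) $$ (i,j)"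
    unfolding lie_bracket_def using A ij by (simp add: carrier_matD)
  thus ?thesis using JJ_mult_l[OF assms] JJ_mult_r[OF assms] by simp
qed

definition Le :: "nat \<Rightarrow> nat \<Rightarrow> complex mat set" where
  "Le m e = {A \<in> carrier_mat m m. \<forall>i j. i < m \<longrightarrow> j < m \<longrightarrow> j + e < i \<longrightarrow> A $$ (i,j) = 0}"

lemma upper_Le0: "upper_borel m = Le m 0" unfolding upper_borel_def Le_def by auto
lemma Le_top: "A \<in> carrier_mat m m \<Longrightarrow> A \<in> Le m m" unfolding Le_def by auto
lemma Le_mono: "e \<le> e' \<Longrightarrow> A \<in> Le m e \<Longrightarrow> A \<in> Le m e'" unfolding Le_def by auto
lemma Le_car: "A \<in> Le m e \<Longrightarrow> A \<in> carrier_mat m m" unfolding Le_def by auto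

lemma F2: assumes A: "A \<in> Le m (Suc e)" shows "lie_bracket (JJ m) A \<in> Le m e"
proof -
  have Ac: "A \<in> carrier_mat m m" using A by (rule Le_car)
  { fix i j assume ij: "i < m" "j < m" "j + e < i"
    have "(if Suc i < m then A $$ (Suc i, j) else 0) = 0" using A ij by (auto simp: Le_def)
    moreover have "(if 0 < j then A $$ (i, j - 1) else 0) = 0" using A ij by (auto simp: Le_def)
    ultimately have "lie_bracket (JJ m) A $$ (i,j) = 0" using br_JJ[OF Ac ij(1,2)] by simp }
  thus ?thesis using Ac unfolding Le_def by auto
qed

lemma F3: assumes A: "A \<in> Le m (Suc (Suc e))" and C: "lie_bracket (JJ m) A \<in> Le m 0"
  shows "A \<in> Le m (Suc e)"
proof -
  have Ac: "A \<in> carrier_mat m m" using A by (rule Le_car)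
  have claim: "j + e + 2 < m \<longrightarrow> A $$ (j + e + 2, j) = 0" for j
  proof (induct j)
    case 0
    show ?case
    proof
      assume m: "0 + e + 2 < m"
      have "lie_bracket (JJ m) A $$ (e + 1, 0) = 0" using C m by (auto simp: Le_def)
      thus "A $$ (0 + e + 2, 0) = 0" using br_JJ[OF Ac, of "e + 1" 0] m by simp
    qed
  next
    case (Suc j)
    show ?case
    proof
      assume m: "Suc j + e + 2 < m"
      have "lie_bracket (JJ m) A $$ (j + e + 2, Suc j) = 0" using C m by (auto simp: Le_def)
      hence "A $$ (Suc (j + e + 2), Suc j) = A $$ (j + e + 2, j)" using br_JJ[OF Ac, of "j + e + 2" "Suc j"] m by simp
      thus "A $$ (Suc j + e + 2, Suc j) = 0" using Suc m by simp
    qed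
  qed
  { fix i j assume ij: "i < m" "j < m" "j + Suc e < i"
    have "A $$ (i,j) = 0"
    proof (cases "i = j + e + 2")
      case True thus ?thesis using claim[of j] ij by simp
    next
      case False hence "j + Suc (Suc e) < i" using ij by simp
      thus ?thesis using A ij by (auto simp: Le_def)
    qed }
  thus ?thesis using Ac unfolding Le_def by auto
qed

lemma F3': "A \<in> Le m e \<Longrightarrow> lie_bracket (JJ m) A \<in> Le m 0 \<Longrightarrow> A \<in> Le m 1"
proof (induct e)
  case 0 thus ?case using Le_mono[of 0 1 A m] by simp
next
  case (Suc e)
  show ?case
  proof (cases e)
    case 0 thus ?thesis using Suc by simp
  next
    case (Suc e')
    hence "A \<in> Le m e" using F3[of A m e'] Suc.prems by simp
    thus ?thesis using Suc.hyps Suc.prems by simp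
  qed
qed

lemma of_nat_plus2_nz: "(of_nat x + 2 :: complex) \<noteq> 0"
proof -
  have "(of_nat x + 2 :: complex) = of_nat (x + 2)" by simp
  thus ?thesis by (metis add_is_0 of_nat_eq_0_iff zero_neq_numeral)
qed

lemma cartan: fixes B :: "nat \<Rightarrow> complex"
  assumes B0: "B 0 = 0" and Bm: "B m = 0"
  and rec: "\<And>t. 1 \<le> t \<Longrightarrow> t < m \<Longrightarrow> B t * (2 * B t - B (t - 1) - B (Suc t)) = 0"
  shows "t \<le> m \<Longrightarrow> B t = 0"
proof (rule ccontr)
  assume t: "t \<le> m" "B t \<noteq> 0"
  define p where "p = (LEAST t. t \<le> m \<and> B t \<noteq> 0)"
  have p: "p \<le> m \<and> B p \<noteq> 0" unfolding p_def by (rule LeastI[of _ t]) (use t in auto)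
  have pmin: "B s = 0" if "s < p" for s
    using not_less_Least[of s "\<lambda>t. t \<le> m \<and> B t \<noteq> 0"] that p unfolding p_def[symmetric] by auto
  have p1: "1 \<le> p" using B0 p by (cases p) auto
  have pm: "p < m" using Bm p by (cases "p = m") auto
  have step: "B (Suc t) = 2 * B t - B (t - 1)" if "1 \<le> t" "t < m" "B t \<noteq> 0" for t
  proof -
    have e: "2 * B t - B (t - 1) - B (Suc t) = 0" using rec[OF that(1,2)] that(3) by (simp only: mult_eq_0_iff) simp
    have "B (Suc t) = 2 * B t - B (t - 1) - (2 * B t - B (t - 1) - B (Suc t))" by (simp add: algebra_simps)
    thus ?thesis using e by simp
  qed
  have main: "p + s + 1 \<le> m \<longrightarrow> B (p + s) = (of_nat s + 1) * B p \<and> B (p + s + 1) = (of_nat s + 2) * B p" for s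
  proof (induct s)
    case 0
    have "B (Suc p) = 2 * B p - B (p - 1)" using step[OF p1 pm] p by simp
    also have "B (p - 1) = 0" using pmin p1 by simp
    finally show ?case by simp
  next
    case (Suc s)
    show ?case
    proof
      assume m: "p + Suc s + 1 \<le> m"
      have IH: "B (p + s) = (of_nat s + 1) * B p" "B (p + s + 1) = (of_nat s + 2) * B p" using Suc m by auto
      have nz: "B (p + s + 1) \<noteq> 0" using IH(2) p of_nat_plus2_nz[of s] by simp
      have "B (Suc (p + s + 1)) = 2 * B (p + s + 1) - B (p + s + 1 - 1)" by (rule step) (use m nz in auto)
      also have "\<dots> = (of_nat s + 3) * B p" using IH by (simp add: algebra_simps)
      finally have "B (p + Suc s + 1) = (of_nat s + 3) * B p" by simp
      moreover have "B (p + Suc s) = (of_nat (Suc s) + 1) * B p" using IH(2) by (simp add: algebra_simps)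
      ultimately show "B (p + Suc s) = (of_nat (Suc s) + 1) * B p \<and> B (p + Suc s + 1) = (of_nat (Suc s) + 2) * B p"
        by (simp add: algebra_simps)
    qed
  qed
  have "B (p + (m - p - 1) + 1) = (of_nat (m - p - 1) + 2) * B p" using main[of "m - p - 1"] pm by simp
  moreover have "p + (m - p - 1) + 1 = m" using pm by simp
  ultimately have "B m = (of_nat (m - p - 1) + 2) * B p" by simp
  thus False using Bm p of_nat_plus2_nz[of "m - p - 1"] by simp
qed

lemma F4: assumes A: "A \<in> Le m 1" and h: "lie_bracket A (lie_bracket (JJ m) A) \<in> Le m 0"
  shows "A \<in> Le m 0"
proof -
  have Ac: "A \<in> carrier_mat m m" using A by (rule Le_car)
  define C where "C = lie_bracket (JJ m) A"
  have CL: "C \<in> Le m 0" unfolding C_def by (rule F2) (use A in simp)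
  have Cc: "C \<in> carrier_mat m m" using CL by (rule Le_car)
  define B where "B t = (if 1 \<le> t \<and> t < m then A $$ (t, t - 1) else 0)" for t
  have B0: "B 0 = 0" and Bm: "B m = 0" by (auto simp: B_def)
  have Cdiag: "C $$ (t,t) = B (Suc t) - B t" if "t < m" for t
    unfolding C_def using br_JJ[OF Ac that that] that by (auto simp: B_def)
  have ACent: "lie_bracket A C $$ (t, t - 1) = B t * (C $$ (t - 1, t - 1) - C $$ (t,t))" if t: "1 \<le> t" "t < m" for t
  proof -
    have 1: "(A * C) $$ (t, t - 1) = A $$ (t, t - 1) * C $$ (t - 1, t - 1)"
    proof (rule mult_entry_single[OF Ac Cc])
      fix k assume k: "k < m" "k \<noteq> t - 1"
      show "A $$ (t, k) * C $$ (k, t - 1) = 0"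
      proof (cases "k < t - 1")
        case True thus ?thesis using A k t by (auto simp: Le_def)
      next
        case False thus ?thesis using CL k t by (auto simp: Le_def)
      qed
    qed (use t in auto)
    have 2: "(C * A) $$ (t, t - 1) = C $$ (t, t) * A $$ (t, t - 1)"
    proof (rule mult_entry_single[OF Cc Ac])
      fix k assume k: "k < m" "k \<noteq> t"
      show "C $$ (t, k) * A $$ (k, t - 1) = 0"
      proof (cases "k < t")
        case True thus ?thesis using CL k t by (auto simp: Le_def)
      next
        case False thus ?thesis using A k t by (auto simp: Le_def)
      qed
    qed (use t in auto)
    have "lie_bracket A C $$ (t, t - 1) = (A * C) $$ (t, t - 1) - (C * A) $$ (t, t - 1)"
      unfolding lie_bracket_def using Ac Cc t by (simp add: carrier_matD)
    thus ?thesis using 1 2 t by (simp add: B_def algebra_simps)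
  qed
  have rec: "B t * (2 * B t - B (t - 1) - B (Suc t)) = 0" if t: "1 \<le> t" "t < m" for t
  proof -
    have z: "lie_bracket A C $$ (t, t - 1) = 0" using h t unfolding C_def[symmetric] by (auto simp: Le_def)
    have c1: "C $$ (t - 1, t - 1) = B t - B (t - 1)" using Cdiag[of "t - 1"] t by simp
    have c2: "C $$ (t, t) = B (Suc t) - B t" using Cdiag[of t] t by simp
    have "C $$ (t - 1, t - 1) - C $$ (t, t) = (B t - B (t - 1)) - (B (Suc t) - B t)" by (simp only: c1 c2)
    also have "\<dots> = 2 * B t - B (t - 1) - B (Suc t)" by (simp add: algebra_simps)
    finally have d: "C $$ (t - 1, t - 1) - C $$ (t, t) = 2 * B t - B (t - 1) - B (Suc t)" .
    show ?thesis using ACent[OF t] z unfolding d by simp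
  qed
  have Bz: "B t = 0" if "t \<le> m" for t using cartan[of B m, OF B0 Bm rec that] by simp
  { fix i j assume ij: "i < m" "j < m" "j < i"
    have "A $$ (i,j) = 0"
    proof (cases "i = Suc j")
      case True thus ?thesis using Bz[of i] ij by (simp add: B_def)
    next
      case False thus ?thesis using A ij by (auto simp: Le_def)
    qed }
  thus ?thesis using Ac unfolding Le_def by auto
qed

lemma exists_switch: "\<not> P 0 \<Longrightarrow> P n \<Longrightarrow> \<exists>j<n. \<not> P j \<and> P (Suc j)"
proof (induct n)
  case 0 thus ?case by simp
next
  case (Suc n)
  show ?case
  proof (cases "P n")
    case True
    then obtain j where "j < n" "\<not> P j" "P (Suc j)" using Suc by auto
    thus ?thesis by (intro exI[of _ j]) auto
  next
    case False thus ?thesis using Suc by (intro exI[of _ n]) auto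
  qed
qed

lemma core_A: assumes Ac: "A \<subseteq> carrier_mat m m"
  and stab: "\<And>w. w \<in> A \<Longrightarrow> lie_bracket (JJ m) w \<in> A"
  and br: "\<And>w w'. w \<in> A \<Longrightarrow> w' \<in> A \<Longrightarrow> lie_bracket w w' \<in> Le m 0"
  shows "A \<subseteq> Le m 0"
proof
  fix z assume z: "z \<in> A"
  define W where "W j = ((\<lambda>w. lie_bracket (JJ m) w) ^^ j) z" for j
  have WS: "W (Suc j) = lie_bracket (JJ m) (W j)" for j by (simp add: W_def)
  have WA: "W j \<in> A" for j by (induct j) (simp_all add: W_def z stab)
  have WL: "j \<le> m \<Longrightarrow> W j \<in> Le m (m - j)" for j
  proof (induct j)
    case 0 thus ?case using Le_top Ac z by (auto simp: W_def)
  next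
    case (Suc j)
    hence "W j \<in> Le m (Suc (m - Suc j))" by (simp add: Suc_diff_Suc)
    thus ?case unfolding WS by (rule F2)
  qed
  have Wm: "W m \<in> Le m 0" using WL[of m] by simp
  show "z \<in> Le m 0"
  proof (rule ccontr)
    assume "z \<notin> Le m 0"
    hence "\<not> (W 0 \<in> Le m 0)" by (simp add: W_def)
    then obtain j where j: "j < m" "W j \<notin> Le m 0" "W (Suc j) \<in> Le m 0"
      using exists_switch[of "\<lambda>j. W j \<in> Le m 0" m] Wm by blast
    have "W j \<in> Le m m" using Le_top Ac WA by auto
    hence "W j \<in> Le m 1" using F3' j(3) WS by simp
    moreover have "lie_bracket (W j) (lie_bracket (JJ m) (W j)) \<in> Le m 0" using br[OF WA stab[OF WA]] .
    ultimately have "W j \<in> Le m 0" by (rule F4)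
    with j show False by simp
  qed
qed

lemma core_S: assumes S: "solvable_subalg m S" and J: "JJ m \<in> S" shows "S \<subseteq> upper_borel m"
proof -
  obtain k where L: "lie_subalgebra m S" and k: "derived_series m S k = {0\<^sub>m m m}"
    using S unfolding solvable_subalg_def by blast
  have "t \<le> k \<longrightarrow> derived_series m S (k - t) \<subseteq> Le m 0" for t
  proof (induct t)
    case 0 show ?case using k by (auto simp: Le_def)
  next
    case (Suc t)
    show ?case
    proof
      assume t: "Suc t \<le> k"
      let ?i = "k - Suc t"
      have si: "Suc ?i = k - t" using t by simp
      have IH: "derived_series m S (Suc ?i) \<subseteq> Le m 0" using Suc t si by simp
      show "derived_series m S (k - Suc t) \<subseteq> Le m 0"
      proof (rule core_A)
        show "derived_series m S ?i \<subseteq> carrier_mat m m" by (rule ds_carrier[OF L])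
        show "lie_bracket (JJ m) w \<in> derived_series m S ?i" if "w \<in> derived_series m S ?i" for w
          by (rule ds_ad[OF L J that])
        show "lie_bracket w w' \<in> Le m 0" if "w \<in> derived_series m S ?i" "w' \<in> derived_series m S ?i" for w w'
          using ds_bracket[OF L that] IH by auto
      qed
    qed
  qed
  from this[of k] show ?thesis by (simp add: upper_Le0)
qed



lemma pow_mat_Suc_left: "A \<in> carrier_mat n n \<Longrightarrow> A ^\<^sub>m Suc k = A * A ^\<^sub>m k"
proof (induct k)
  case 0 thus ?case by (simp add: carrier_matD)
next
  case (Suc k)
  have "A ^\<^sub>m Suc (Suc k) = (A * A ^\<^sub>m k) * A" using Suc by simp
  also have "\<dots> = A * (A ^\<^sub>m k * A)" using Suc by (simp add: assoc_mult_mat[of _ n n _ n _ n])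
  finally show ?case by simp
qed

lemma pow_mat_add: "A \<in> carrier_mat n n \<Longrightarrow> A ^\<^sub>m (a + b) = A ^\<^sub>m a * A ^\<^sub>m b"
proof (induct b)
  case 0 thus ?case by (simp add: carrier_matD)
next
  case (Suc b)
  have "A ^\<^sub>m (a + Suc b) = (A ^\<^sub>m a * A ^\<^sub>m b) * A" using Suc by simp
  also have "\<dots> = A ^\<^sub>m a * (A ^\<^sub>m b * A)" using Suc by (simp add: assoc_mult_mat[of _ n n _ n _ n])
  finally show ?case by simp
qed

lemma pow_mat_comm: "A \<in> carrier_mat n n \<Longrightarrow> A ^\<^sub>m k * A = A * A ^\<^sub>m k"
  using pow_mat_Suc_left[of A n k] by simp

lemma pow_zero_mono: "A \<in> carrier_mat n n \<Longrightarrow> A ^\<^sub>m k = 0\<^sub>m n n \<Longrightarrow> k \<le> k' \<Longrightarrow> A ^\<^sub>m k' = 0\<^sub>m n n"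
proof -
  assume A: "A \<in> carrier_mat n n" and z: "A ^\<^sub>m k = 0\<^sub>m n n" and kk: "k \<le> k'"
  have "A ^\<^sub>m k' = A ^\<^sub>m k * A ^\<^sub>m (k' - k)" using pow_mat_add[OF A, of k "k' - k"] kk by simp
  thus ?thesis using z A by simp
qed

lemma transpose_pow: "(A :: complex mat) \<in> carrier_mat n n \<Longrightarrow> transpose_mat (A ^\<^sub>m k) = (transpose_mat A) ^\<^sub>m k"
proof (induct k)
  case 0 thus ?case by (simp add: carrier_matD)
next
  case (Suc k)
  have "transpose_mat (A ^\<^sub>m Suc k) = transpose_mat (A * A ^\<^sub>m k)" using pow_mat_Suc_left[OF Suc(2)] by simp
  also have "\<dots> = transpose_mat (A ^\<^sub>m k) * transpose_mat A" by (rule transpose_mult) (use Suc(2) in auto)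
  finally show ?case using Suc by simp
qed

section \<open>Bounding the length of independent families\<close>

definition flat :: "nat \<Rightarrow> complex mat \<Rightarrow> complex vec" where
  "flat m M = vec (m * m) (\<lambda>k. M $$ (k div m, k mod m))"

lemma flat_idx: "i < m \<Longrightarrow> j < m \<Longrightarrow> flat m M $ (i * m + j) = M $$ (i,j)"
proof -
  assume ij: "i < m" "j < m"
  have "i * m + j < m * m"
  proof -
    have "i * m + j < i * m + m" using ij by simp
    also have "\<dots> = Suc i * m" by simp
    also have "\<dots> \<le> m * m" using mult_le_mono1[of "Suc i" m m] ij by simp
    finally show ?thesis .
  qed
  moreover have "(i * m + j) div m = i" "(i * m + j) mod m = j" using ij by auto
  ultimately show ?thesis unfolding flat_def by simp
qed

lemma flat_inj: "A \<in> carrier_mat m m \<Longrightarrow> B \<in> carrier_mat m m \<Longrightarrow> flat m A = flat m B \<Longrightarrow> A = B"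
  by (rule eq_matI) (auto simp: carrier_matD, metis flat_idx)

lemma sum_two: "finite A \<Longrightarrow> i \<in> A \<Longrightarrow> j \<in> A \<Longrightarrow> i \<noteq> j \<Longrightarrow> (\<And>x. x \<in> A \<Longrightarrow> x \<noteq> i \<Longrightarrow> x \<noteq> j \<Longrightarrow> f x = 0)
  \<Longrightarrow> sum f A = f i + f j"
  by (subst sum.remove[of A i], simp_all, subst sum.remove[of _ j]) (auto intro!: sum.neutral)

lemma indep_distinct: assumes car: "set Ms \<subseteq> carrier_mat m m" and ind: "lin_indep_mats m Ms"
  shows "distinct Ms"
proof (rule ccontr)
  assume "\<not> distinct Ms"
  then obtain i j where ij: "i < length Ms" "j < length Ms" "i \<noteq> j" "Ms ! i = Ms ! j"
    by (auto simp: distinct_conv_nth)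
  define cs where "cs = map (\<lambda>l. if l = i then 1 else if l = j then -1 else (0::complex)) [0..<length Ms]"
  have len: "length cs = length Ms" by (simp add: cs_def)
  have "lin_comb m cs Ms = 0\<^sub>m m m"
  proof (rule eq_matI)
    fix a b assume ab: "a < dim_row (0\<^sub>m m m)" "b < dim_col (0\<^sub>m m m)"
    have "lin_comb m cs Ms $$ (a,b) = (\<Sum>l<length Ms. cs!l * Ms!l $$ (a,b))"
      using lin_comb_index[OF car len] ab by simp
    also have "\<dots> = cs!i * Ms!i $$ (a,b) + cs!j * Ms!j $$ (a,b)"
      by (rule sum_two) (use ij in \<open>auto simp: cs_def\<close>)
    also have "\<dots> = 0" using ij by (simp add: cs_def)
    finally show "lin_comb m cs Ms $$ (a,b) = 0\<^sub>m m m $$ (a,b)" using ab by simp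
  qed (use car in auto)
  moreover have "(1::complex) \<in> set cs" using ij unfolding cs_def by (force simp: image_iff)
  ultimately show False using ind len unfolding lin_indep_mats_def by fastforce
qed

lemma indep_len_bound: assumes car: "set Ms \<subseteq> carrier_mat m m" and ind: "lin_indep_mats m Ms"
  shows "length Ms \<le> m * m"
proof -
  interpret V: vec_space "TYPE(complex)" "m * m" .
  have dist: "distinct Ms" by (rule indep_distinct[OF car ind])
  have inj: "inj_on (flat m) (set Ms)"
  proof (rule inj_onI)
    fix x y assume "x \<in> set Ms" "y \<in> set Ms" "flat m x = flat m y"
    thus "x = y" using car flat_inj[of x m y] by auto
  qed
  let ?A = "set (map (flat m) Ms)"
  have distA: "distinct (map (flat m) Ms)" using dist inj by (simp add: distinct_map)
  have Ac: "?A \<subseteq> carrier_vec (m * m)" by (auto simp: flat_def)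
  have li: "V.lin_indpt ?A"
  proof (rule V.finite_lin_indpt2)
    show "finite ?A" by simp
    show "?A \<subseteq> carrier_vec (m * m)" by (rule Ac)
    fix a assume lc: "V.lincomb a ?A = 0\<^sub>v (m * m)"
    define cs where "cs = map (\<lambda>M. a (flat m M)) Ms"
    have len: "length cs = length Ms" by (simp add: cs_def)
    have "lin_comb m cs Ms = 0\<^sub>m m m"
    proof (rule eq_matI)
      fix i j assume ij: "i < dim_row (0\<^sub>m m m)" "j < dim_col (0\<^sub>m m m)"
      have k: "i * m + j < m * m" 
      proof -
        have "i * m + j < i * m + m" using ij by simp
        also have "\<dots> = Suc i * m" by simp
        also have "\<dots> \<le> m * m" using mult_le_mono1[of "Suc i" m m] ij by simp
        finally show ?thesis .
      qed
      have "0 = V.lincomb a ?A $ (i * m + j)" using lc k by simp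
      also have "\<dots> = (\<Sum>x\<in>?A. a x * x $ (i * m + j))" by (rule V.lincomb_index[OF k Ac])
      also have "\<dots> = sum_list (map (\<lambda>x. a x * x $ (i * m + j)) (map (flat m) Ms))"
        by (rule sum.distinct_set_conv_list[OF distA])
      also have "\<dots> = (\<Sum>l<length Ms. cs ! l * Ms ! l $$ (i,j))"
        using ij by (simp add: sum_list_sum_nth cs_def flat_idx lessThan_atLeast0 o_def)
      also have "\<dots> = lin_comb m cs Ms $$ (i,j)" using lin_comb_index[OF car len] ij by simp
      finally show "lin_comb m cs Ms $$ (i,j) = 0\<^sub>m m m $$ (i,j)" using ij by simp
    qed (use car in auto)
    hence z: "\<forall>c\<in>set cs. c = 0" using ind len unfolding lin_indep_mats_def by blast
    show "\<forall>v\<in>?A. a v = 0" using z by (auto simp: cs_def)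
  qed
  have "card ?A \<le> V.dim" using V.li_le_dim(2)[OF V.fin_dim _ li] Ac by simp
  moreover have "card ?A = length Ms" using distinct_card[OF distA] by simp
  ultimately show ?thesis using V.dim_is_n by simp
qed

lemma mat_dim_ge: assumes V: "V \<subseteq> carrier_mat m m" and Ms: "set Ms \<subseteq> V" and ind: "lin_indep_mats m Ms"
  shows "length Ms \<le> mat_dim m V"
proof -
  have "{length Ms | Ms. set Ms \<subseteq> V \<and> lin_indep_mats m Ms} \<subseteq> {..m * m}"
    using indep_len_bound V by fastforce
  hence "finite {length Ms | Ms. set Ms \<subseteq> V \<and> lin_indep_mats m Ms}" by (rule finite_subset) simp
  thus ?thesis unfolding mat_dim_def using Ms ind by (intro Max_ge) auto
qed



section \<open>Jordan form of nilpotent matrices\<close>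

lemma nil_jordan: assumes N: "(N :: complex mat) \<in> carrier_mat n n" and K: "N ^\<^sub>m K = 0\<^sub>m n n"
  obtains n_as P Q where "similar_mat_wit N (jordan_matrix n_as) P Q" "0 \<notin> fst ` set n_as"
   "\<And>s a. (s,a) \<in> set n_as \<Longrightarrow> a = 0" "sum_list (map fst n_as) = n"
proof -
  obtain as where "char_poly N = (\<Prod>a\<leftarrow>as. [:- a, 1:])" using char_poly_factorized[OF N] by auto
  then obtain n_as where jnf: "jordan_nf N n_as" using jordan_nf_exists[OF N] by blast
  then obtain P Q where w: "similar_mat_wit N (jordan_matrix n_as) P Q" and z: "0 \<notin> fst ` set n_as"
    unfolding jordan_nf_def similar_mat_def by blast
  let ?J = "jordan_matrix n_as"
  have cars: "?J \<in> carrier_mat n n" "P \<in> carrier_mat n n" "Q \<in> carrier_mat n n"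
    using w N unfolding similar_mat_wit_def Let_def by (auto simp: carrier_matD)
  have sz: "sum_list (map fst n_as) = n" using carrier_matD(1)[OF cars(1)] by simp
  have JK: "?J ^\<^sub>m K = 0\<^sub>m n n"
  proof -
    have w': "similar_mat_wit ?J N Q P" by (rule similar_mat_wit_sym[OF w])
    have "?J ^\<^sub>m K = Q * N ^\<^sub>m K * P" using similar_mat_wit_pow_id[OF w'] .
    thus ?thesis using K cars by simp
  qed
  have ev: "a = 0" if sa: "(s,a) \<in> set n_as" for s a
  proof -
    have s: "s \<noteq> 0" using z sa by force
    have "poly (char_poly ?J) a = 0"
    proof -
      have "char_poly ?J = (\<Prod>(n,a)\<leftarrow>n_as. [:-a,1:]^n)" by (rule jordan_matrix_char_poly)
      hence "poly (char_poly ?J) a = prod_list (map (\<lambda>p. poly p a) (map (\<lambda>(n,b). [:-b,1:]^n) n_as))"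
        by (simp add: poly_prod_list)
      moreover have "0 \<in> set (map (\<lambda>p. poly p a) (map (\<lambda>(n,b). [:-b,1:]^n) n_as))"
        using sa s by (force simp: image_iff)
      ultimately show ?thesis by (simp add: prod_list_zero_iff)
    qed
    hence "eigenvalue ?J a" using eigenvalue_root_char_poly[OF cars(1)] by simp
    then obtain v where v: "eigenvector ?J v a" unfolding eigenvalue_def by blast
    have vc: "v \<in> carrier_vec n" "v \<noteq> 0\<^sub>v n" using v cars(1) unfolding eigenvector_def by (auto simp: carrier_matD)
    have "?J ^\<^sub>m K *\<^sub>v v = a ^ K \<cdot>\<^sub>v v" by (rule eigenvector_pow[OF cars(1) v])
    moreover have "0\<^sub>m n n *\<^sub>v v = 0\<^sub>v n" by (rule eq_vecI) (use vc in \<open>auto simp: scalar_prod_def\<close>)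
    ultimately have e: "a ^ K \<cdot>\<^sub>v v = 0\<^sub>v n" using JK vc by simp
    obtain i where i: "i < n" "v $ i \<noteq> 0" using vc by (metis eq_vecI carrier_vecD index_zero_vec(1,2))
    have "(a ^ K \<cdot>\<^sub>v v) $ i = 0" using e i by simp
    hence "a ^ K * v $ i = 0" using i vc by simp
    thus "a = 0" using i by simp
  qed
  show thesis using that[OF w z ev sz] .
qed

lemma fb_idx: assumes A: "A \<in> carrier_mat s s" and D: "D \<in> carrier_mat n' n'" and ij: "i < s + n'" "j < s + n'"
  shows "four_block_mat A (0\<^sub>m s n') (0\<^sub>m n' s) D $$ (i,j) =
    (if i < s then if j < s then A $$ (i,j) else 0 else if j < s then 0 else D $$ (i - s, j - s))"
  using A D ij by (simp add: carrier_matD)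

lemma fb_zero: "four_block_mat (0\<^sub>m s s) (0\<^sub>m s n') (0\<^sub>m n' s) (0\<^sub>m n' n') = 0\<^sub>m (s + n') (s + n')"
  by (rule eq_matI) auto

lemma jm_pow_zero: "(\<And>s a. (s,a) \<in> set n_as \<Longrightarrow> a = (0::complex)) \<Longrightarrow> (\<And>s a. (s,a) \<in> set n_as \<Longrightarrow> s \<le> k) \<Longrightarrow>
  jordan_matrix n_as ^\<^sub>m k = 0\<^sub>m (sum_list (map fst n_as)) (sum_list (map fst n_as))"
proof (induct n_as)
  case Nil
  show ?case by (rule eq_matI) (simp_all add: jordan_matrix_def)
next
  case (Cons sa rest)
  obtain s a where sa: "sa = (s,a)" by force
  have a: "a = 0" using Cons(2) sa by auto
  have sk: "s \<le> k" using Cons(3) sa by auto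
  let ?n' = "sum_list (map fst rest)"
  have IH: "jordan_matrix rest ^\<^sub>m k = 0\<^sub>m ?n' ?n'" using Cons by auto
  have Bk: "jordan_block s (0::complex) ^\<^sub>m k = 0\<^sub>m s s"
    unfolding jordan_block_zero_pow using sk by (intro eq_matI) auto
  have "jordan_matrix (sa # rest) ^\<^sub>m k = four_block_mat (jordan_block s 0 ^\<^sub>m k) (0\<^sub>m s ?n') (0\<^sub>m ?n' s) (jordan_matrix rest ^\<^sub>m k)"
    unfolding sa a jordan_matrix_Cons by (rule pow_four_block_mat) auto
  also have "\<dots> = 0\<^sub>m (s + ?n') (s + ?n')" unfolding Bk IH by (rule fb_zero)
  finally show ?case using sa by simp
qed

lemma nil_pow: assumes "nilpotent_mat m x" shows "x ^\<^sub>m m = 0\<^sub>m m m"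
proof -
  obtain K where x: "x \<in> carrier_mat m m" and K: "x ^\<^sub>m K = 0\<^sub>m m m" using assms unfolding nilpotent_mat_def by blast
  obtain n_as P Q where w: "similar_mat_wit x (jordan_matrix n_as) P Q"
    and ev: "\<And>s a. (s,a) \<in> set n_as \<Longrightarrow> a = 0" and sz: "sum_list (map fst n_as) = m"
    using nil_jordan[OF x K] by metis
  have cars: "P \<in> carrier_mat m m" "Q \<in> carrier_mat m m"
    using w x unfolding similar_mat_wit_def Let_def by (auto simp: carrier_matD)
  have le: "s \<le> m" if "(s,a) \<in> set n_as" for s a
    using member_le_sum_list[of s "map fst n_as"] that sz by force
  have "jordan_matrix n_as ^\<^sub>m m = 0\<^sub>m m m" using jm_pow_zero[of n_as m] ev le sz by simp
  moreover have "x ^\<^sub>m m = P * jordan_matrix n_as ^\<^sub>m m * Q" by (rule similar_mat_wit_pow_id[OF w])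
  ultimately show ?thesis using cars by simp
qed

lemma jm_diag0: "(\<And>s a. (s,a) \<in> set n_as \<Longrightarrow> a = 0) \<Longrightarrow> i < sum_list (map fst n_as) \<Longrightarrow>
   jordan_matrix n_as $$ (i,i) = (0::complex)"
proof (induct n_as arbitrary: i)
  case Nil thus ?case by simp
next
  case (Cons sa rest)
  obtain s a where sa: "sa = (s,a)" by force
  have a: "a = 0" using Cons(2) sa by auto
  let ?n' = "sum_list (map fst rest)"
  have "jordan_matrix (sa # rest) $$ (i,i) = (if i < s then jordan_block s a $$ (i,i) else jordan_matrix rest $$ (i - s, i - s))"
    unfolding sa jordan_matrix_Cons using Cons(3) sa by (subst fb_idx) auto
  moreover have ev': "\<And>s a. (s,a) \<in> set rest \<Longrightarrow> a = 0" using Cons(2) by auto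
  moreover have "jordan_matrix rest $$ (i - s, i - s) = 0" if "\<not> i < s"
    by (rule Cons(1)[OF ev']) (use Cons(3) sa that in auto)
  ultimately show ?case using a sa by auto
qed

definition witp :: "nat \<Rightarrow> complex mat list \<Rightarrow> bool" where
  "witp m Fs \<longleftrightarrow> (\<forall>l<length Fs. \<exists>i j. i < m \<and> j < m \<and> Fs!l $$ (i,j) \<noteq> 0 \<and>
     (\<forall>l'<length Fs. l' \<noteq> l \<longrightarrow> Fs!l' $$ (i,j) = 0))"

lemma witp_indep: "set Fs \<subseteq> carrier_mat m m \<Longrightarrow> witp m Fs \<Longrightarrow> lin_indep_mats m Fs"
  by (rule lin_indep_witness) (auto simp: witp_def)



lemma JJ_pow_idx: "i < s \<Longrightarrow> j < s \<Longrightarrow> (JJ s ^\<^sub>m p) $$ (i,j) = (if i \<le> j \<and> j - i = p then 1 else 0)"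
  by (simp add: jordan_block_zero_pow)

lemma W_step:
  fixes s n' :: nat and J' :: "complex mat" and Fs' :: "complex mat list"
  assumes J': "J' \<in> carrier_mat n' n'" and Fc: "set Fs' \<subseteq> carrier_mat n' n'"
   and Fcomm: "\<And>F. F \<in> set Fs' \<Longrightarrow> F * J' = J' * F" and Fw: "witp n' Fs'" and Fl: "length Fs' = n'"
  defines "J \<equiv> four_block_mat (JJ s) (0\<^sub>m s n') (0\<^sub>m n' s) J'"
   and "Fs \<equiv> map (\<lambda>p. four_block_mat (JJ s ^\<^sub>m p) (0\<^sub>m s n') (0\<^sub>m n' s) (0\<^sub>m n' n')) [0..<s] @
             map (\<lambda>Z. four_block_mat (0\<^sub>m s s) (0\<^sub>m s n') (0\<^sub>m n' s) Z) Fs'"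
  shows "set Fs \<subseteq> carrier_mat (s + n') (s + n')" 
    and "\<And>F. F \<in> set Fs \<Longrightarrow> F * J = J * F" 
    and "witp (s + n') Fs" 
    and "length Fs = s + n'"
    and "\<And>F i j. F \<in> set Fs \<Longrightarrow> i < s \<Longrightarrow> s \<le> j \<Longrightarrow> j < s + n' \<Longrightarrow> F $$ (i,j) = 0"
proof -
  let ?f = "\<lambda>p. four_block_mat (JJ s ^\<^sub>m p) (0\<^sub>m s n') (0\<^sub>m n' s) (0\<^sub>m n' n')"
  let ?g = "\<lambda>Z. four_block_mat (0\<^sub>m s s) (0\<^sub>m s n') (0\<^sub>m n' s) Z"
  have setFs: "F \<in> set Fs \<longleftrightarrow> (\<exists>p<s. F = ?f p) \<or> (\<exists>Z\<in>set Fs'. F = ?g Z)" for F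
    unfolding Fs_def by auto
  show "set Fs \<subseteq> carrier_mat (s + n') (s + n')" using Fc unfolding Fs_def by auto
  show len: "length Fs = s + n'" using Fl unfolding Fs_def by simp
  have nth: "Fs ! l = (if l < s then ?f l else ?g (Fs' ! (l - s)))" if "l < s + n'" for l
    using that Fl unfolding Fs_def by (simp add: nth_append)
  have dJ: "dim_row J' = n'" "dim_col J' = n'" using J' by auto
  show "F * J = J * F" if F: "F \<in> set Fs" for F
  proof -
    from F[unfolded setFs] show ?thesis
    proof (elim disjE exE conjE bexE)
      fix p assume "p < s" and Fp: "F = ?f p"
      have "F * J = four_block_mat (JJ s ^\<^sub>m p * JJ s) (0\<^sub>m s n') (0\<^sub>m n' s) (0\<^sub>m n' n')"
        unfolding Fp J_def
        by (subst mult_four_block_mat[of "JJ s ^\<^sub>m p" s s "0\<^sub>m s n'" n' "0\<^sub>m n' s" n' "0\<^sub>m n' n'" "JJ s" s "0\<^sub>m s n'" n' "0\<^sub>m n' s" J'])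
          (use J' in \<open>auto simp: dJ\<close>)
      moreover have "J * F = four_block_mat (JJ s * JJ s ^\<^sub>m p) (0\<^sub>m s n') (0\<^sub>m n' s) (0\<^sub>m n' n')"
        unfolding Fp J_def
        by (subst mult_four_block_mat[of "JJ s" s s "0\<^sub>m s n'" n' "0\<^sub>m n' s" n' J' "JJ s ^\<^sub>m p" s "0\<^sub>m s n'" n' "0\<^sub>m n' s" "0\<^sub>m n' n'"])
          (use J' in \<open>auto simp: dJ\<close>)
      moreover have "JJ s ^\<^sub>m p * JJ s = JJ s * JJ s ^\<^sub>m p" by (rule pow_mat_comm[of _ s]) simp
      ultimately show ?thesis by simp
    next
      fix Z assume Z: "Z \<in> set Fs'" and FZ: "F = ?g Z"
      have Zc: "Z \<in> carrier_mat n' n'" using Z Fc by auto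
      have dZ: "dim_row Z = n'" "dim_col Z = n'" using Zc by auto
      have "F * J = four_block_mat (0\<^sub>m s s) (0\<^sub>m s n') (0\<^sub>m n' s) (Z * J')"
        unfolding FZ J_def
        by (subst mult_four_block_mat[of "0\<^sub>m s s" s s "0\<^sub>m s n'" n' "0\<^sub>m n' s" n' Z "JJ s" s "0\<^sub>m s n'" n' "0\<^sub>m n' s" J'])
          (use J' Zc in \<open>auto simp: dJ dZ\<close>)
      moreover have "J * F = four_block_mat (0\<^sub>m s s) (0\<^sub>m s n') (0\<^sub>m n' s) (J' * Z)"
        unfolding FZ J_def
        by (subst mult_four_block_mat[of "JJ s" s s "0\<^sub>m s n'" n' "0\<^sub>m n' s" n' J' "0\<^sub>m s s" s "0\<^sub>m s n'" n' "0\<^sub>m n' s" Z])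
          (use J' Zc in \<open>auto simp: dJ dZ\<close>)
      ultimately show ?thesis using Fcomm[OF Z] by simp
    qed
  qed
  show "F $$ (i,j) = 0" if F: "F \<in> set Fs" and ij: "i < s" "s \<le> j" "j < s + n'" for F i j
    using F[unfolded setFs] 
  proof (elim disjE exE conjE bexE)
    fix p assume Fp: "F = ?f p" show ?thesis unfolding Fp using ij by (subst fb_idx) auto
  next
    fix Z assume Z: "Z \<in> set Fs'" and FZ: "F = ?g Z" 
    have "Z \<in> carrier_mat n' n'" using Z Fc by auto
    thus ?thesis unfolding FZ using ij by (subst fb_idx) auto
  qed
  show "witp (s + n') Fs" unfolding witp_def len
  proof (intro allI impI)
    fix l assume l: "l < s + n'"
    show "\<exists>i j. i < s + n' \<and> j < s + n' \<and> Fs ! l $$ (i, j) \<noteq> 0 \<and> (\<forall>l'<s + n'. l' \<noteq> l \<longrightarrow> Fs ! l' $$ (i, j) = 0)"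
    proof (cases "l < s")
      case True
      have v: "Fs ! l $$ (0, l) = 1" using True l by (auto simp: nth[OF l] fb_idx JJ_pow_idx)
      have o: "Fs ! l' $$ (0, l) = 0" if "l' < s + n'" "l' \<noteq> l" for l'
      proof (cases "l' < s")
        case True thus ?thesis using that \<open>l < s\<close> by (auto simp: nth[OF that(1)] fb_idx JJ_pow_idx)
      next
        case False thus ?thesis using that \<open>l < s\<close> Fl Fc by (auto simp: nth[OF that(1)] fb_idx)
      qed
      show ?thesis using v o True l by (intro exI[of _ 0] exI[of _ l]) auto
    next
      case False
      let ?q = "l - s"
      have q: "?q < length Fs'" using l False Fl by simp
      obtain i j where ij: "i < n'" "j < n'" "Fs' ! ?q $$ (i,j) \<noteq> 0"
        "\<forall>l'<length Fs'. l' \<noteq> ?q \<longrightarrow> Fs' ! l' $$ (i,j) = 0" using Fw q unfolding witp_def by blast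
      have Fq: "Fs' ! ?q \<in> carrier_mat n' n'" using Fc q by auto
      have v: "Fs ! l $$ (s + i, s + j) = Fs' ! ?q $$ (i,j)" using False l ij Fq by (auto simp: nth[OF l] fb_idx)
      have o: "Fs ! l' $$ (s + i, s + j) = 0" if "l' < s + n'" "l' \<noteq> l" for l'
      proof (cases "l' < s")
        case True thus ?thesis using ij that by (auto simp: nth[OF that(1)] fb_idx)
      next
        case False
        have "Fs' ! (l' - s) \<in> carrier_mat n' n'" using Fc that False Fl by auto
        moreover have "Fs' ! (l' - s) $$ (i,j) = 0" using ij(4) that False \<open>\<not> l < s\<close> Fl by auto
        ultimately show ?thesis using False ij that by (auto simp: nth[OF that(1)] fb_idx)
      qed
      show ?thesis using v o ij by (intro exI[of _ "s + i"] exI[of _ "s + j"]) auto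
    qed
  qed
qed

lemma W_all: "\<forall>x\<in>set n_as. snd x = (0::complex) \<Longrightarrow>
  \<exists>Fs. set Fs \<subseteq> carrier_mat (sum_list (map fst n_as)) (sum_list (map fst n_as)) \<and>
    (\<forall>F\<in>set Fs. F * jordan_matrix n_as = jordan_matrix n_as * F) \<and>
    witp (sum_list (map fst n_as)) Fs \<and> length Fs = sum_list (map fst n_as)"
proof (induct n_as)
  case Nil show ?case by (intro exI[of _ "[]"]) (simp add: witp_def)
next
  case (Cons sa rest)
  obtain s a where sa: "sa = (s,a)" by force
  have a: "a = 0" using Cons(2) sa by auto
  have ev': "\<forall>x\<in>set rest. snd x = 0" using Cons(2) by auto
  let ?n' = "sum_list (map fst rest)"
  obtain Fs' where F': "set Fs' \<subseteq> carrier_mat ?n' ?n'" "\<forall>F\<in>set Fs'. F * jordan_matrix rest = jordan_matrix rest * F"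
    "witp ?n' Fs'" "length Fs' = ?n'" using Cons(1)[OF ev'] by blast
  have J': "jordan_matrix rest \<in> carrier_mat ?n' ?n'" by simp
  have Fc': "\<And>F. F \<in> set Fs' \<Longrightarrow> F * jordan_matrix rest = jordan_matrix rest * F" using F'(2) by blast
  note W = W_step[where s=s, OF J' F'(1) Fc' F'(3,4)]
  let ?Fs = "map (\<lambda>p. four_block_mat (JJ s ^\<^sub>m p) (0\<^sub>m s ?n') (0\<^sub>m ?n' s) (0\<^sub>m ?n' ?n')) [0..<s] @
             map (\<lambda>Z. four_block_mat (0\<^sub>m s s) (0\<^sub>m s ?n') (0\<^sub>m ?n' s) Z) Fs'"
  have J: "jordan_matrix (sa # rest) = four_block_mat (JJ s) (0\<^sub>m s ?n') (0\<^sub>m ?n' s) (jordan_matrix rest)"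
    unfolding sa a jordan_matrix_Cons by simp
  show ?case unfolding J using W(1) W(2) W(3) W(4) sa by (intro exI[of _ ?Fs]) auto
qed

lemma witp_snoc: assumes w: "witp n Fs" and z: "\<And>F. F \<in> set Fs \<Longrightarrow> F $$ (i0,j0) = 0"
  and ij0: "i0 < n" "j0 < n" and E0: "E $$ (i0,j0) \<noteq> 0"
  and Ez: "\<And>i j. i < n \<Longrightarrow> j < n \<Longrightarrow> (i,j) \<noteq> (i0,j0) \<Longrightarrow> E $$ (i,j) = 0"
  shows "witp n (Fs @ [E])"
  unfolding witp_def
proof (intro allI impI)
  fix l assume l: "l < length (Fs @ [E])"
  show "\<exists>i j. i < n \<and> j < n \<and> (Fs @ [E]) ! l $$ (i, j) \<noteq> 0 \<and>
      (\<forall>l'<length (Fs @ [E]). l' \<noteq> l \<longrightarrow> (Fs @ [E]) ! l' $$ (i, j) = 0)"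
  proof (cases "l < length Fs")
    case True
    obtain i j where ij: "i < n" "j < n" "Fs ! l $$ (i,j) \<noteq> 0" "\<forall>l'<length Fs. l' \<noteq> l \<longrightarrow> Fs ! l' $$ (i,j) = 0"
      using w True unfolding witp_def by blast
    have "(i,j) \<noteq> (i0,j0)" using z[of "Fs ! l"] True ij by auto
    hence "E $$ (i,j) = 0" using Ez ij by auto
    thus ?thesis using ij True by (intro exI[of _ i] exI[of _ j]) (auto simp: nth_append less_Suc_eq)
  next
    case False
    hence ll: "l = length Fs" using l by simp
    show ?thesis using ij0 E0 z ll by (intro exI[of _ i0] exI[of _ j0]) (auto simp: nth_append less_Suc_eq)
  qed
qed

lemma E_comm: assumes J: "J \<in> carrier_mat n n" and n: "1 \<le> n"
  and c0: "\<And>i. i < n \<Longrightarrow> J $$ (i,0) = 0" and rl: "\<And>j. j < n \<Longrightarrow> J $$ (n - 1, j) = 0"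
  defines "E \<equiv> mat n n (\<lambda>(i,j). if i = 0 \<and> j = n - 1 then 1 else (0::complex))"
  shows "E * J = J * E"
proof -
  have Ec: "E \<in> carrier_mat n n" unfolding E_def by simp
  { fix i j assume ij: "i < n" "j < n"
    have "(E * J) $$ (i,j) = 0"
      by (rule mult_entry_zero[OF Ec J ij]) (use rl n ij in \<open>auto simp: E_def\<close>)
    moreover have "(J * E) $$ (i,j) = 0"
      by (rule mult_entry_zero[OF J Ec ij]) (use c0 n ij in \<open>auto simp: E_def\<close>)
    ultimately have "(E * J) $$ (i,j) = (J * E) $$ (i,j)" by simp }
  thus ?thesis using Ec J by (intro eq_matI) auto
qed

lemma QP_cancel: assumes P: "(P :: complex mat) \<in> carrier_mat n n" and Q: "Q \<in> carrier_mat n n" and QP: "Q * P = 1\<^sub>m n"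
  and X: "X \<in> carrier_mat n n" shows "Q * (P * X * Q) * P = X"
proof -
  have "Q * (P * X * Q) * P = (Q * P) * X * (Q * P)" using P Q X by (simp add: assoc_mult_mat[of _ n n _ n _ n])
  thus ?thesis using QP left_mult_one_mat[OF X] right_mult_one_mat[OF X] by simp
qed

lemma indep_conj: assumes P: "P \<in> carrier_mat n n" and Q: "Q \<in> carrier_mat n n" and QP: "Q * P = 1\<^sub>m n"
  and Ms: "set Ms \<subseteq> carrier_mat n n" and ind: "lin_indep_mats n Ms"
  shows "lin_indep_mats n (map (\<lambda>Z. P * Z * Q) Ms)"
  unfolding lin_indep_mats_def
proof (intro allI impI)
  fix cs assume h: "length cs = length (map (\<lambda>Z. P * Z * Q) Ms) \<and> lin_comb n cs (map (\<lambda>Z. P * Z * Q) Ms) = 0\<^sub>m n n"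
  have "P * lin_comb n cs Ms * Q = 0\<^sub>m n n" using h cj_lin_comb[OF P Q QP Ms] by simp
  hence "Q * (P * lin_comb n cs Ms * Q) * P = 0\<^sub>m n n" using P Q by simp
  hence "lin_comb n cs Ms = 0\<^sub>m n n" using QP_cancel[OF P Q QP] Ms by simp
  moreover have "length cs = length Ms" using h by simp
  ultimately show "\<forall>c\<in>set cs. c = 0" using ind unfolding lin_indep_mats_def by blast
qed



lemma jm_col0: assumes ev: "\<And>s a. (s,a) \<in> set n_as \<Longrightarrow> a = (0::complex)" and i: "i < sum_list (map fst n_as)"
  shows "jordan_matrix n_as $$ (i,0) = 0"
proof (cases "i = 0")
  case True thus ?thesis using jm_diag0[OF ev i] by simp
next
  case False thus ?thesis using jordan_matrix_upper_triangular[OF i, of 0] by simp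
qed

lemma jm_rowlast: assumes ev: "\<And>s a. (s,a) \<in> set n_as \<Longrightarrow> a = (0::complex)" and j: "j < sum_list (map fst n_as)"
  shows "jordan_matrix n_as $$ (sum_list (map fst n_as) - 1, j) = 0"
proof (cases "j = sum_list (map fst n_as) - 1")
  case True thus ?thesis using jm_diag0[OF ev, where i = j] j by simp
next
  case False show ?thesis by (rule jordan_matrix_upper_triangular) (use j False in auto)
qed

lemma reg_pow: assumes R: "regular_nilpotent n N" and n1: "1 \<le> n" shows "N ^\<^sub>m (n - 1) \<noteq> 0\<^sub>m n n"
proof
  assume z: "N ^\<^sub>m (n - 1) = 0\<^sub>m n n"
  have N: "N \<in> carrier_mat n n" using R by (simp add: regular_nilpotent_def nilpotent_mat_def)
  have md: "mat_dim n (centralizer n N) = n" using R by (simp add: regular_nilpotent_def)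
  obtain n_as P Q where w: "similar_mat_wit N (jordan_matrix n_as) P Q" and z0: "0 \<notin> fst ` set n_as"
    and ev: "\<And>s a. (s,a) \<in> set n_as \<Longrightarrow> a = 0" and sz: "sum_list (map fst n_as) = n"
    using nil_jordan[OF N z] by metis
  let ?J = "jordan_matrix n_as"
  have cars: "?J \<in> carrier_mat n n" "P \<in> carrier_mat n n" "Q \<in> carrier_mat n n"
    and QP: "Q * P = 1\<^sub>m n" and NPJQ: "N = P * ?J * Q"
    using w N unfolding similar_mat_wit_def Let_def by (auto simp: carrier_matD)
  have JK: "?J ^\<^sub>m (n - 1) = 0\<^sub>m n n"
  proof -
    have w': "similar_mat_wit ?J N Q P" by (rule similar_mat_wit_sym[OF w])
    have "?J ^\<^sub>m (n - 1) = Q * N ^\<^sub>m (n - 1) * P" using similar_mat_wit_pow_id[OF w'] .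
    thus ?thesis using z cars by simp
  qed
  obtain s a rest where nas: "n_as = (s,a) # rest" using sz n1 by (cases n_as) auto
  have a: "a = 0" using ev nas by auto
  have s0: "s \<noteq> 0" using z0 nas by force
  let ?n' = "sum_list (map fst rest)"
  have nsum: "n = s + ?n'" using sz nas by simp
  have J: "?J = four_block_mat (JJ s) (0\<^sub>m s ?n') (0\<^sub>m ?n' s) (jordan_matrix rest)"
    unfolding nas a jordan_matrix_Cons by simp
  have ev': "\<forall>x\<in>set rest. snd x = 0"
  proof
    fix x assume "x \<in> set rest"
    hence "(fst x, snd x) \<in> set n_as" using nas by simp
    thus "snd x = 0" by (rule ev)
  qed
  show False
  proof (cases "rest = []")
    case True
    hence sn: "s = n" using nsum by simp
    have "?J ^\<^sub>m (n - 1) = four_block_mat (JJ s ^\<^sub>m (n - 1)) (0\<^sub>m s ?n') (0\<^sub>m ?n' s) (jordan_matrix rest ^\<^sub>m (n - 1))"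
      unfolding J by (rule pow_four_block_mat) auto
    moreover have "(four_block_mat (JJ s ^\<^sub>m (n - 1)) (0\<^sub>m s ?n') (0\<^sub>m ?n' s) (jordan_matrix rest ^\<^sub>m (n - 1))) $$ (0, n - 1)
       = (JJ s ^\<^sub>m (n - 1)) $$ (0, n - 1)"
      by (subst fb_idx) (use sn n1 nsum True in auto)
    ultimately have "(?J ^\<^sub>m (n - 1)) $$ (0, n - 1) = (JJ s ^\<^sub>m (n - 1)) $$ (0, n - 1)" by simp
    also have "\<dots> = 1" using sn n1 by (simp add: JJ_pow_idx)
    finally show False using JK n1 by simp
  next
    case False
    then obtain s' a' rest' where r: "rest = (s',a') # rest'" by (cases rest) auto
    have "s' \<noteq> 0" using z0 nas r by force
    hence n'1: "1 \<le> ?n'" using r by simp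
    obtain Fs' where F': "set Fs' \<subseteq> carrier_mat ?n' ?n'" "\<forall>F\<in>set Fs'. F * jordan_matrix rest = jordan_matrix rest * F"
      "witp ?n' Fs'" "length Fs' = ?n'" using W_all[OF ev'] by blast
    have Fc': "\<And>F. F \<in> set Fs' \<Longrightarrow> F * jordan_matrix rest = jordan_matrix rest * F" using F'(2) by blast
    have J': "jordan_matrix rest \<in> carrier_mat ?n' ?n'" by simp
    note W = W_step[where s=s, OF J' F'(1) Fc' F'(3,4)]
    let ?Fs = "map (\<lambda>p. four_block_mat (JJ s ^\<^sub>m p) (0\<^sub>m s ?n') (0\<^sub>m ?n' s) (0\<^sub>m ?n' ?n')) [0..<s] @
             map (\<lambda>Z. four_block_mat (0\<^sub>m s s) (0\<^sub>m s ?n') (0\<^sub>m ?n' s) Z) Fs'"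
    define E where "E = mat n n (\<lambda>(i,j). if i = 0 \<and> j = n - 1 then 1 else (0::complex))"
    have Ec: "E \<in> carrier_mat n n" unfolding E_def by simp
    have EJ: "E * ?J = ?J * E" unfolding E_def
    proof (rule E_comm[OF cars(1) n1])
      show "?J $$ (i, 0) = 0" if "i < n" for i using jm_col0[OF ev, where i = i] that sz by simp
      show "?J $$ (n - 1, j) = 0" if "j < n" for j
      proof -
        have "?J $$ (sum_list (map fst n_as) - 1, j) = 0" by (rule jm_rowlast) (use ev that sz in auto)
        thus ?thesis using sz by simp
      qed
    qed
    let ?Ms = "?Fs @ [E]"
    have Msc: "set ?Ms \<subseteq> carrier_mat n n" using W(1) Ec nsum by auto
    have Mscomm: "F * ?J = ?J * F" if "F \<in> set ?Ms" for F
    proof (cases "F = E")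
      case True thus ?thesis using EJ by simp
    next
      case False
      hence "F \<in> set ?Fs" using that by auto
      thus ?thesis using W(2) J by simp
    qed
    have Msw: "witp n ?Ms"
    proof (rule witp_snoc[of n ?Fs 0 "n - 1" E])
      show "witp n ?Fs" using W(3) nsum by simp
      show "F $$ (0, n - 1) = 0" if "F \<in> set ?Fs" for F
        by (rule W_step(5)[where s=s and J'="jordan_matrix rest" and Fs'=Fs' and n'="?n'"])
          (use J' F'(1,3,4) Fc' that s0 n'1 nsum in auto)
      show "0 < n" "n - 1 < n" using n1 by auto
      show "E $$ (0, n - 1) \<noteq> 0" using n1 by (simp add: E_def)
      show "E $$ (i, j) = 0" if "i < n" "j < n" "(i, j) \<noteq> (0, n - 1)" for i j
        using that by (simp add: E_def)
    qed
    have Msl: "length ?Ms = n + 1" using W(4) nsum by simp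
    have ind: "lin_indep_mats n ?Ms" by (rule witp_indep[OF Msc Msw])
    let ?Ms2 = "map (\<lambda>Z. P * Z * Q) ?Ms"
    have ind2: "lin_indep_mats n ?Ms2" by (rule indep_conj[OF cars(2,3) QP Msc ind])
    have cen: "set ?Ms2 \<subseteq> centralizer n N"
    proof
      fix Y assume "Y \<in> set ?Ms2"
      then obtain Z where Z: "Z \<in> set ?Ms" "Y = P * Z * Q" by auto
      have Zc: "Z \<in> carrier_mat n n" using Msc Z by auto
      have "lie_bracket Z ?J = 0\<^sub>m n n" using Mscomm[OF Z(1)] Zc cars unfolding lie_bracket_def by simp
      hence "P * lie_bracket Z ?J * Q = 0\<^sub>m n n" using cars by simp
      moreover have "P * lie_bracket Z ?J * Q = lie_bracket Y N"
        using conj_br[OF cars(2,3) Zc cars(1) QP] Z NPJQ by simp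
      ultimately show "Y \<in> centralizer n N" unfolding centralizer_def using Z Zc cars by auto
    qed
    have "length ?Ms2 \<le> mat_dim n (centralizer n N)"
      by (rule mat_dim_ge[OF _ cen ind2]) (auto simp: centralizer_def)
    thus False using md Msl by simp
  qed
qed



lemma mv_entry: "A \<in> carrier_mat m n \<Longrightarrow> w \<in> carrier_vec n \<Longrightarrow> r < m \<Longrightarrow> (A *\<^sub>v w) $ r = (\<Sum>l<n. A $$ (r,l) * w $ l)"
  by (simp add: scalar_prod_def lessThan_atLeast0 carrier_matD carrier_vecD)

lemma pow_mv: "A \<in> carrier_mat n n \<Longrightarrow> w \<in> carrier_vec n \<Longrightarrow> A ^\<^sub>m a *\<^sub>v (A ^\<^sub>m b *\<^sub>v w) = A ^\<^sub>m (a + b) *\<^sub>v w"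
  using pow_mat_add[of A n a b] assoc_mult_mat_vec[of "A ^\<^sub>m a" n n "A ^\<^sub>m b" n w] by simp

lemma vec_nz_entry: "w \<in> carrier_vec n \<Longrightarrow> w \<noteq> 0\<^sub>v n \<Longrightarrow> \<exists>r<n. w $ r \<noteq> 0"
  by (metis eq_vecI carrier_vecD index_zero_vec(1,2))

lemma mult_entry_Suc: assumes "A \<in> carrier_mat (Suc n) (Suc n)" "B \<in> carrier_mat (Suc n) (Suc n)" "i < Suc n" "j < Suc n"
  and "B $$ (n, j) = 0"
  shows "(A * B) $$ (i,j) = (\<Sum>l<n. A $$ (i,l) * B $$ (l,j))"
  using mult_entry[OF assms(1-4)] assms(5) by simp

lemma krylov_inj: assumes N: "(N :: complex mat) \<in> carrier_mat n n" and Nn: "N ^\<^sub>m n = 0\<^sub>m n n" and v: "v \<in> carrier_vec n"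
  and cyc: "N ^\<^sub>m (n - 1) *\<^sub>v v \<noteq> 0\<^sub>v n"
  and z: "z \<in> carrier_vec n" and Pz: "mat n n (\<lambda>(r,i). (N ^\<^sub>m (n - 1 - i) *\<^sub>v v) $ r) *\<^sub>v z = 0\<^sub>v n"
  shows "z = 0\<^sub>v n"
proof (rule ccontr)
  assume nz: "z \<noteq> 0\<^sub>v n"
  let ?P = "mat n n (\<lambda>(r,i). (N ^\<^sub>m (n - 1 - i) *\<^sub>v v) $ r)"
  have ex: "\<exists>i. i < n \<and> z $ i \<noteq> 0" using vec_nz_entry[OF z nz] by blast
  define i0 where "i0 = (GREATEST i. i < n \<and> z $ i \<noteq> 0)"
  have i0: "i0 < n \<and> z $ i0 \<noteq> 0" unfolding i0_def
    by (rule GreatestI_ex_nat[of "\<lambda>i. i < n \<and> z $ i \<noteq> 0" n]) (use ex in auto)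
  have gt: "z $ i = 0" if "i < n" "i0 < i" for i
    using Greatest_le_nat[of "\<lambda>i. i < n \<and> z $ i \<noteq> 0" i n] that unfolding i0_def[symmetric] by force
  have Pc: "?P \<in> carrier_mat n n" by simp
  have big: "N ^\<^sub>m e = 0\<^sub>m n n" if "n \<le> e" for e using pow_zero_mono[OF N Nn that] .
  have colP: "(N ^\<^sub>m i0 * ?P) $$ (r,l) = (N ^\<^sub>m (i0 + (n - 1 - l)) *\<^sub>v v) $ r" if "r < n" "l < n" for r l
  proof -
    have "(N ^\<^sub>m i0 * ?P) $$ (r,l) = (N ^\<^sub>m i0 *\<^sub>v col ?P l) $ r" using that N by simp
    also have "col ?P l = N ^\<^sub>m (n - 1 - l) *\<^sub>v v" using that N v by (intro eq_vecI) auto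
    also have "N ^\<^sub>m i0 *\<^sub>v (N ^\<^sub>m (n - 1 - l) *\<^sub>v v) = N ^\<^sub>m (i0 + (n - 1 - l)) *\<^sub>v v" using pow_mv N v by simp
    finally show ?thesis .
  qed
  have key: "(N ^\<^sub>m i0 *\<^sub>v (?P *\<^sub>v z)) $ r = z $ i0 * (N ^\<^sub>m (n - 1) *\<^sub>v v) $ r" if r: "r < n" for r
  proof -
    have "N ^\<^sub>m i0 *\<^sub>v (?P *\<^sub>v z) = (N ^\<^sub>m i0 * ?P) *\<^sub>v z"
      using N Pc z assoc_mult_mat_vec[of "N ^\<^sub>m i0" n n ?P n z] by simp
    hence "(N ^\<^sub>m i0 *\<^sub>v (?P *\<^sub>v z)) $ r = (\<Sum>l<n. (N ^\<^sub>m i0 * ?P) $$ (r,l) * z $ l)"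
      using r N z mv_entry[of "N ^\<^sub>m i0 * ?P" n n z r] by simp
    also have "\<dots> = (N ^\<^sub>m i0 * ?P) $$ (r,i0) * z $ i0"
    proof (rule sum_single)
      show "(N ^\<^sub>m i0 * ?P) $$ (r,l) * z $ l = 0" if "l \<in> {..<n}" "l \<noteq> i0" for l
      proof (cases "l < i0")
        case True
        have "N ^\<^sub>m (i0 + (n - 1 - l)) = 0\<^sub>m n n" using big True i0 by simp
        thus ?thesis using colP[OF r, of l] that r v by simp
      next
        case False then have "i0 < l" using that by simp
        thus ?thesis using gt that by simp
      qed
    qed (use i0 in auto)
    also have "(N ^\<^sub>m i0 * ?P) $$ (r,i0) = (N ^\<^sub>m (n - 1) *\<^sub>v v) $ r" using colP[OF r, of i0] i0 by simp
    finally show ?thesis by (simp add: mult.commute)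
  qed
  have cc: "N ^\<^sub>m (n - 1) *\<^sub>v v \<in> carrier_vec n" by (rule mult_mat_vec_carrier[of _ n n]) (use N v in auto)
  obtain r where r: "r < n" "(N ^\<^sub>m (n - 1) *\<^sub>v v) $ r \<noteq> 0" using vec_nz_entry[OF cc cyc] by blast
  have "(N ^\<^sub>m i0 *\<^sub>v (?P *\<^sub>v z)) $ r = 0" using Pz r N by (simp add: scalar_prod_def)
  thus False using key[OF r(1)] r(2) i0 by simp
qed



lemma krylov:
  assumes n1: "1 \<le> n" and x: "x \<in> carrier_mat (Suc n) (Suc n)" and xm: "x ^\<^sub>m (Suc n) = 0\<^sub>m (Suc n) (Suc n)"
  and Nn: "upper_left n x ^\<^sub>m n = 0\<^sub>m n n"
  and cyc: "upper_left n x ^\<^sub>m (n - 1) *\<^sub>v vec n (\<lambda>i. x $$ (i, n)) \<noteq> 0\<^sub>v n"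
  shows "\<exists>k k'. k \<in> K_grp n \<and> k' \<in> carrier_mat (Suc n) (Suc n) \<and> k * k' = 1\<^sub>m (Suc n) \<and> k' * k = 1\<^sub>m (Suc n)
    \<and> k' * x * k = JJ (Suc n)"
proof -
  define N where "N = upper_left n x"
  define v where "v = vec n (\<lambda>i. x $$ (i, n))"
  have Nc: "N \<in> carrier_mat n n" by (simp add: N_def upper_left_def)
  have vc: "v \<in> carrier_vec n" by (simp add: v_def)
  have Nidx: "N $$ (i,j) = x $$ (i,j)" if "i < n" "j < n" for i j using that by (simp add: N_def upper_left_def)
  have Nn': "N ^\<^sub>m n = 0\<^sub>m n n" using Nn by (simp add: N_def)
  have cyc': "N ^\<^sub>m (n - 1) *\<^sub>v v \<noteq> 0\<^sub>v n" using cyc by (simp add: N_def v_def)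
  define P where "P = mat n n (\<lambda>(r,i). (N ^\<^sub>m (n - 1 - i) *\<^sub>v v) $ r)"
  have Pc: "P \<in> carrier_mat n n" by (simp add: P_def)
  have Pidx: "P $$ (r,i) = (N ^\<^sub>m (n - 1 - i) *\<^sub>v v) $ r" if "r < n" "i < n" for r i using that by (simp add: P_def)
  define k where "k = mat (Suc n) (Suc n) (\<lambda>(r,i). if r < n \<and> i < n then P $$ (r,i) else if r = n \<and> i = n then 1 else (0::complex))"
  have kc: "k \<in> carrier_mat (Suc n) (Suc n)" by (simp add: k_def)
  have kidx: "k $$ (r,i) = (if r < n \<and> i < n then P $$ (r,i) else if r = n \<and> i = n then 1 else 0)"
    if "r < Suc n" "i < Suc n" for r i
    using that by (simp add: k_def)
  have kinj: "y = 0\<^sub>v (Suc n)" if y: "y \<in> carrier_vec (Suc n)" "k *\<^sub>v y = 0\<^sub>v (Suc n)" for y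
  proof -
    have yn: "y $ n = 0"
    proof -
      have "(k *\<^sub>v y) $ n = (\<Sum>l<Suc n. k $$ (n,l) * y $ l)" by (rule mv_entry[OF kc y(1)]) simp
      also have "\<dots> = k $$ (n,n) * y $ n" by (rule sum_single) (auto simp: kidx)
      also have "\<dots> = y $ n" by (simp add: kidx)
      finally show ?thesis using y by simp
    qed
    define z where "z = vec n (\<lambda>i. y $ i)"
    have zc: "z \<in> carrier_vec n" by (simp add: z_def)
    have "P *\<^sub>v z = 0\<^sub>v n"
    proof (rule eq_vecI)
      fix r assume "r < dim_vec (0\<^sub>v n)" hence r: "r < n" by simp
      have "0 = (k *\<^sub>v y) $ r" using y r by simp
      also have "\<dots> = (\<Sum>l<Suc n. k $$ (r,l) * y $ l)" by (rule mv_entry[OF kc y(1)]) (use r in simp)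
      also have "\<dots> = (\<Sum>l<n. k $$ (r,l) * y $ l) + k $$ (r,n) * y $ n" by simp
      also have "k $$ (r,n) = 0" using r by (simp add: kidx)
      also have "(\<Sum>l<n. k $$ (r,l) * y $ l) = (\<Sum>l<n. P $$ (r,l) * z $ l)"
        by (rule sum.cong) (use r in \<open>auto simp: kidx z_def\<close>)
      also have "(\<Sum>l<n. P $$ (r,l) * z $ l) = (P *\<^sub>v z) $ r" by (rule mv_entry[OF Pc zc r, symmetric])
      finally show "(P *\<^sub>v z) $ r = 0\<^sub>v n $ r" using r by simp
    qed (simp add: P_def)
    hence z0: "z = 0\<^sub>v n" using krylov_inj[OF Nc Nn' vc cyc' zc] unfolding P_def by simp
    show "y = 0\<^sub>v (Suc n)"
    proof (rule eq_vecI)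
      fix i assume "i < dim_vec (0\<^sub>v (Suc n))" hence i: "i < Suc n" by simp
      show "y $ i = 0\<^sub>v (Suc n) $ i"
      proof (cases "i = n")
        case True thus ?thesis using yn by simp
      next
        case False hence "i < n" using i by simp
        hence "z $ i = y $ i" by (simp add: z_def)
        thus ?thesis using z0 i \<open>i < n\<close> by simp
      qed
    qed (use y in auto)
  qed
  have det: "det k \<noteq> 0" using det_0_iff_vec_prod_zero[OF kc] kinj by blast
  obtain k' where k': "k' \<in> carrier_mat (Suc n) (Suc n)" "k' * k = 1\<^sub>m (Suc n)" "k * k' = 1\<^sub>m (Suc n)"
    using det_non_zero_imp_unit[OF kc det, of "()"] unfolding Units_def by (auto simp: ring_mat_simps)
  have xk: "(x * k) $$ (i,j) = (k * JJ (Suc n)) $$ (i,j)" if i: "i < n" and j: "j < Suc n" for i j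
  proof -
    have kJ: "(k * JJ (Suc n)) $$ (i,j) = (if 0 < j then k $$ (i, j - 1) else 0)"
      by (rule JJ_mult_r[OF kc]) (use i j in auto)
    show ?thesis
    proof (cases "j = n")
      case True
      have "(x * k) $$ (i,j) = (\<Sum>l<Suc n. x $$ (i,l) * k $$ (l,j))" by (rule mult_entry[OF x kc]) (use i j in auto)
      also have "\<dots> = x $$ (i,n) * k $$ (n,j)" by (rule sum_single) (use True in \<open>auto simp: kidx\<close>)
      also have "\<dots> = v $ i" using i True by (simp add: kidx v_def)
      finally have 1: "(x * k) $$ (i,j) = v $ i" .
      have "(k * JJ (Suc n)) $$ (i,j) = P $$ (i, n - 1)" using kJ True n1 i by (simp add: kidx)
      also have "\<dots> = v $ i" using i n1 Nc vc by (simp add: Pidx)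
      finally show ?thesis using 1 by simp
    next
      case False hence jn: "j < n" using j by simp
      have vj: "N ^\<^sub>m (n - 1 - j) *\<^sub>v v \<in> carrier_vec n" by (rule mult_mat_vec_carrier[of _ n n]) (use Nc vc in auto)
      have "(x * k) $$ (i,j) = (\<Sum>l<n. x $$ (i,l) * k $$ (l,j))"
        by (rule mult_entry_Suc[OF x kc]) (use i j jn in \<open>auto simp: kidx\<close>)
      also have "\<dots> = (\<Sum>l<n. N $$ (i,l) * (N ^\<^sub>m (n - 1 - j) *\<^sub>v v) $ l)"
        by (rule sum.cong) (use i jn in \<open>auto simp: kidx Nidx Pidx\<close>)
      also have "\<dots> = (N *\<^sub>v (N ^\<^sub>m (n - 1 - j) *\<^sub>v v)) $ i" by (rule mv_entry[OF Nc vj i, symmetric])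
      also have "N *\<^sub>v (N ^\<^sub>m (n - 1 - j) *\<^sub>v v) = N ^\<^sub>m (Suc (n - 1 - j)) *\<^sub>v v"
        using pow_mv[OF Nc vc, of 1 "n - 1 - j"] Nc by (simp add: carrier_matD)
      finally have 1: "(x * k) $$ (i,j) = (N ^\<^sub>m (Suc (n - 1 - j)) *\<^sub>v v) $ i" .
      show ?thesis
      proof (cases "j = 0")
        case True
        have "N ^\<^sub>m (Suc (n - 1 - j)) = 0\<^sub>m n n" using True n1 Nn' by simp
        hence "(x * k) $$ (i,j) = 0" using 1 i vc by (simp add: scalar_prod_def)
        thus ?thesis using kJ True by simp
      next
        case False
        have "(k * JJ (Suc n)) $$ (i,j) = P $$ (i, j - 1)" using kJ False i jn by (simp add: kidx)
        also have "\<dots> = (N ^\<^sub>m (n - 1 - (j - 1)) *\<^sub>v v) $ i" using i jn by (simp add: Pidx)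
        also have "n - 1 - (j - 1) = Suc (n - 1 - j)" using False jn by simp
        finally show ?thesis using 1 by simp
      qed
    qed
  qed
  define X where "X = k' * x * k"
  have Xc: "X \<in> carrier_mat (Suc n) (Suc n)" using k' x kc by (simp add: X_def)
  have k'col: "k' $$ (i, n) = (if i = n then 1 else 0)" if i: "i < Suc n" for i
  proof -
    have "(k' * k) $$ (i, n) = (\<Sum>l<Suc n. k' $$ (i,l) * k $$ (l,n))" by (rule mult_entry[OF k'(1) kc i]) simp
    also have "\<dots> = k' $$ (i,n) * k $$ (n,n)" by (rule sum_single) (auto simp: kidx)
    also have "\<dots> = k' $$ (i,n)" by (simp add: kidx)
    finally show ?thesis using k'(2) i by simp
  qed
  have Xrows: "X $$ (i,j) = JJ (Suc n) $$ (i,j)" if i: "i < n" and j: "j < Suc n" for i j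
  proof -
    have JJ_eq: "JJ (Suc n) = k' * (k * JJ (Suc n))"
    proof -
      have "(k' * k) * JJ (Suc n) = k' * (k * JJ (Suc n))" by (rule assoc_mult_mat) (use k' kc in auto)
      thus ?thesis using k'(2) by simp
    qed
    have X_eq: "X = k' * (x * k)" using k' x kc by (simp add: X_def assoc_mult_mat[of _ "Suc n" "Suc n" _ "Suc n" _ "Suc n"])
    have "X $$ (i,j) = (\<Sum>l<Suc n. k' $$ (i,l) * (x * k) $$ (l,j))"
      unfolding X_eq by (rule mult_entry[OF k'(1)]) (use x kc i j in auto)
    also have "\<dots> = (\<Sum>l<Suc n. k' $$ (i,l) * (k * JJ (Suc n)) $$ (l,j))"
    proof (rule sum.cong)
      fix l assume "l \<in> {..<Suc n}"
      thus "k' $$ (i,l) * (x * k) $$ (l,j) = k' $$ (i,l) * (k * JJ (Suc n)) $$ (l,j)"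
        using xk[of l j] j k'col[of i] i by (cases "l = n") auto
    qed simp
    also have "\<dots> = JJ (Suc n) $$ (i,j)"
      by (subst (2) JJ_eq, rule mult_entry[OF k'(1), symmetric]) (use kc i j in auto)
    finally show ?thesis .
  qed
  have Xpow: "X ^\<^sub>m (Suc n) = 0\<^sub>m (Suc n) (Suc n)"
  proof -
    have w: "similar_mat_wit X x k' k" unfolding similar_mat_wit_def Let_def
      using Xc x k' kc by (auto simp: X_def carrier_matD)
    show ?thesis using similar_mat_wit_pow_id[OF w, of "Suc n"] xm k' kc by simp
  qed
  have r0: "(X ^\<^sub>m j) $$ (0,c) = (if c = j then 1 else 0)" if "j \<le> n" "c < Suc n" for j c
    using that
  proof (induct j arbitrary: c)
    case 0 thus ?case using Xc by (simp add: carrier_matD)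
  next
    case (Suc j)
    have "(X ^\<^sub>m Suc j) $$ (0,c) = (X ^\<^sub>m j * X) $$ (0,c)" by simp
    also have "\<dots> = (X ^\<^sub>m j) $$ (0,j) * X $$ (j,c)"
      by (rule mult_entry_single[of _ "Suc n"]) (use Suc Xc in auto)
    also have "\<dots> = JJ (Suc n) $$ (j,c)" using Suc by (simp add: Xrows)
    also have "\<dots> = (if c = Suc j then 1 else 0)" using Suc by simp
    finally show ?case .
  qed
  have lastrow: "X $$ (n,c) = 0" if c: "c < Suc n" for c
  proof -
    have "(X ^\<^sub>m Suc n) $$ (0,c) = (X ^\<^sub>m n * X) $$ (0,c)" by simp
    also have "\<dots> = (X ^\<^sub>m n) $$ (0,n) * X $$ (n,c)"
      by (rule mult_entry_single[of _ "Suc n"]) (use c Xc r0 in auto)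
    also have "\<dots> = X $$ (n,c)" using r0[of n n] by simp
    finally show ?thesis using Xpow c by simp
  qed
  have XJ: "X = JJ (Suc n)"
  proof (rule eq_matI)
    fix i j assume "i < dim_row (JJ (Suc n))" "j < dim_col (JJ (Suc n))"
    hence ij: "i < Suc n" "j < Suc n" by auto
    show "X $$ (i,j) = JJ (Suc n) $$ (i,j)"
    proof (cases "i = n")
      case True thus ?thesis using lastrow[OF ij(2)] ij by simp
    next
      case False thus ?thesis using Xrows ij by simp
    qed
  qed (use Xc in auto)
  have kK: "k \<in> K_grp n"
    unfolding K_grp_def invertible_mat_def inverts_mat_def
    using kc k' by (auto simp: kidx carrier_matD)
  show ?thesis using kK k' XJ unfolding X_def by blast
qed



section \<open>From a conjugated principal nilpotent to the Borel subalgebra\<close>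

lemma FIN: assumes B: "borel_subalg m b" and xb: "x \<in> b"
  and g: "g \<in> carrier_mat m m" and g': "g' \<in> carrier_mat m m" and gg': "g * g' = 1\<^sub>m m" and g'g: "g' * g = 1\<^sub>m m"
  and J: "g' * x * g = JJ m"
  shows "b = (\<lambda>A. g * A * g') ` upper_borel m"
proof -
  have S: "solvable_subalg m b" and max: "\<And>c. solvable_subalg m c \<Longrightarrow> b \<subseteq> c \<Longrightarrow> c = b"
    using B unfolding borel_subalg_def by auto
  have bc: "b \<subseteq> carrier_mat m m" using S unfolding solvable_subalg_def lie_subalgebra_def by auto
  have S': "solvable_subalg m ((\<lambda>A. g' * A * g) ` b)" by (rule solv_conj[OF g' g gg' S])
  have "JJ m \<in> (\<lambda>A. g' * A * g) ` b" by (rule image_eqI[of _ _ x]) (use J xb in auto)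
  hence sub: "(\<lambda>A. g' * A * g) ` b \<subseteq> upper_borel m" by (rule core_S[OF S'])
  have "b \<subseteq> (\<lambda>A. g * A * g') ` upper_borel m"
  proof
    fix z assume z: "z \<in> b"
    have zc: "z \<in> carrier_mat m m" using z bc by auto
    have "z = g * (g' * z * g) * g'" using QP_cancel[OF g' g gg' zc] by simp
    moreover have "g' * z * g \<in> upper_borel m" using sub z by blast
    ultimately show "z \<in> (\<lambda>A. g * A * g') ` upper_borel m" by blast
  qed
  moreover have "solvable_subalg m ((\<lambda>A. g * A * g') ` upper_borel m)" by (rule solv_conj[OF g g' g'g U_solv])
  ultimately show ?thesis using max by blast
qed

section \<open>The reversal matrix\<close>

definition w0 :: "nat \<Rightarrow> complex mat" where "w0 m = mat m m (\<lambda>(i,j). if i + j = m - 1 then 1 else 0)"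

lemma w0_c[simp]: "w0 m \<in> carrier_mat m m" by (simp add: w0_def)
lemma w0_dim[simp]: "dim_row (w0 m) = m" "dim_col (w0 m) = m" by (simp_all add: w0_def)

lemma w0_left: assumes A: "A \<in> carrier_mat m m" and ij: "i < m" "j < m"
  shows "(w0 m * A) $$ (i,j) = A $$ (m - 1 - i, j)"
proof -
  have "(w0 m * A) $$ (i,j) = w0 m $$ (i, m - 1 - i) * A $$ (m - 1 - i, j)"
    by (rule mult_entry_single[OF w0_c A ij]) (use ij in \<open>auto simp: w0_def\<close>)
  thus ?thesis using ij by (simp add: w0_def)
qed

lemma w0_right: assumes A: "A \<in> carrier_mat m m" and ij: "i < m" "j < m"
  shows "(A * w0 m) $$ (i,j) = A $$ (i, m - 1 - j)"
proof -
  have "(A * w0 m) $$ (i,j) = A $$ (i, m - 1 - j) * w0 m $$ (m - 1 - j, j)"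
    by (rule mult_entry_single[OF A w0_c ij]) (use ij in \<open>auto simp: w0_def\<close>)
  thus ?thesis using ij by (simp add: w0_def)
qed

lemma w0_conj: assumes A: "A \<in> carrier_mat m m" and ij: "i < m" "j < m"
  shows "(w0 m * A * w0 m) $$ (i,j) = A $$ (m - 1 - i, m - 1 - j)"
  using w0_right[of "w0 m * A" m i j] w0_left[OF A, of i "m - 1 - j"] A ij by simp

lemma w0_sq: "w0 m * w0 m = 1\<^sub>m m"
proof (rule eq_matI)
  fix i j assume "i < dim_row (1\<^sub>m m)" "j < dim_col (1\<^sub>m m)"
  hence ij: "i < m" "j < m" by auto
  show "(w0 m * w0 m) $$ (i,j) = 1\<^sub>m m $$ (i,j)" using w0_left[OF w0_c ij] ij by (auto simp: w0_def)
qed auto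

lemma w0_U: "(\<lambda>A. w0 m * A * w0 m) ` upper_borel m = lower_borel m"
proof
  show "(\<lambda>A. w0 m * A * w0 m) ` upper_borel m \<subseteq> lower_borel m"
  proof
    fix B assume "B \<in> (\<lambda>A. w0 m * A * w0 m) ` upper_borel m"
    then obtain A where A: "A \<in> upper_borel m" "B = w0 m * A * w0 m" by blast
    have Ac: "A \<in> carrier_mat m m" using A by (simp add: upper_borel_def)
    show "B \<in> lower_borel m" unfolding lower_borel_def A(2)
    proof (intro CollectI conjI allI impI)
      show "w0 m * A * w0 m \<in> carrier_mat m m" using Ac by simp
      fix i j assume ij: "i < j \<and> j < m"
      have "(w0 m * A * w0 m) $$ (i,j) = A $$ (m - 1 - i, m - 1 - j)" by (rule w0_conj[OF Ac]) (use ij in auto)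
      also have "\<dots> = 0" using A(1) ij by (auto simp: upper_borel_def)
      finally show "(w0 m * A * w0 m) $$ (i,j) = 0" .
    qed
  qed
next
  show "lower_borel m \<subseteq> (\<lambda>A. w0 m * A * w0 m) ` upper_borel m"
  proof
    fix B assume B: "B \<in> lower_borel m"
    have Bc: "B \<in> carrier_mat m m" using B by (simp add: lower_borel_def)
    have "w0 m * B * w0 m \<in> upper_borel m" unfolding upper_borel_def
    proof (intro CollectI conjI allI impI)
      show "w0 m * B * w0 m \<in> carrier_mat m m" using Bc by simp
      fix i j assume ij: "j < i \<and> i < m"
      have "(w0 m * B * w0 m) $$ (i,j) = B $$ (m - 1 - i, m - 1 - j)" by (rule w0_conj[OF Bc]) (use ij in auto)
      also have "\<dots> = 0" using B ij by (auto simp: lower_borel_def)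
      finally show "(w0 m * B * w0 m) $$ (i,j) = 0" .
    qed
    moreover have "B = w0 m * (w0 m * B * w0 m) * w0 m" using QP_cancel[OF w0_c w0_c w0_sq Bc] by simp
    ultimately show "B \<in> (\<lambda>A. w0 m * A * w0 m) ` upper_borel m" by blast
  qed
qed

lemma w0_JJ: "w0 m * transpose_mat (JJ m) * w0 m = JJ m"
proof (rule eq_matI)
  fix i j assume "i < dim_row (JJ m)" "j < dim_col (JJ m)"
  hence ij: "i < m" "j < m" by auto
  have "(w0 m * transpose_mat (JJ m) * w0 m) $$ (i,j) = transpose_mat (JJ m) $$ (m - 1 - i, m - 1 - j)"
    by (rule w0_conj) (use ij in auto)
  also have "\<dots> = JJ m $$ (m - 1 - j, m - 1 - i)" using ij by simp
  also have "\<dots> = JJ m $$ (i,j)" using ij by auto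
  finally show "(w0 m * transpose_mat (JJ m) * w0 m) $$ (i,j) = JJ m $$ (i,j)" .
qed auto

lemma K_inv: assumes k: "k \<in> K_grp n" and k': "k' \<in> carrier_mat (Suc n) (Suc n)"
  and kk': "k * k' = 1\<^sub>m (Suc n)" and k'k: "k' * k = 1\<^sub>m (Suc n)"
  shows "k' \<in> K_grp n"
proof -
  have kc: "k \<in> carrier_mat (Suc n) (Suc n)" and kz: "\<And>i. i < n \<Longrightarrow> k $$ (i, n) = 0 \<and> k $$ (n, i) = 0"
    using k unfolding K_grp_def by auto
  have nn: "(k * k') $$ (n,n) = k $$ (n,n) * k' $$ (n,n)"
    by (rule mult_entry_single[OF kc k']) (use kz in auto)
  hence "k $$ (n,n) * k' $$ (n,n) = 1" using kk' by simp
  hence knn: "k $$ (n,n) \<noteq> 0" by (metis mult_zero_left zero_neq_one)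
  have c1: "k' $$ (i, n) = 0" if i: "i < n" for i
  proof -
    have "(k' * k) $$ (i,n) = k' $$ (i,n) * k $$ (n,n)"
      by (rule mult_entry_single[OF k' kc]) (use kz i in auto)
    thus ?thesis using k'k i knn by simp
  qed
  have c2: "k' $$ (n, i) = 0" if i: "i < n" for i
  proof -
    have "(k * k') $$ (n,i) = k $$ (n,n) * k' $$ (n,i)"
      by (rule mult_entry_single[OF kc k']) (use kz i in auto)
    thus ?thesis using kk' i knn by simp
  qed
  show ?thesis unfolding K_grp_def invertible_mat_def inverts_mat_def
    using k' kc kk' k'k c1 c2 by (auto simp: carrier_matD)
qed

lemma K_transpose: assumes k: "k \<in> K_grp n" and k': "k' \<in> carrier_mat (Suc n) (Suc n)"
  and kk': "k * k' = 1\<^sub>m (Suc n)" and k'k: "k' * k = 1\<^sub>m (Suc n)"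
  shows "transpose_mat k \<in> K_grp n"
proof -
  have kc: "k \<in> carrier_mat (Suc n) (Suc n)" and kz: "\<And>i. i < n \<Longrightarrow> k $$ (i, n) = 0 \<and> k $$ (n, i) = 0"
    using k unfolding K_grp_def by auto
  have 1: "transpose_mat k * transpose_mat k' = 1\<^sub>m (Suc n)"
    using transpose_mult[OF k' kc] k'k by simp
  have 2: "transpose_mat k' * transpose_mat k = 1\<^sub>m (Suc n)"
    using transpose_mult[OF kc k'] kk' by simp
  show ?thesis unfolding K_grp_def invertible_mat_def inverts_mat_def
    using kc k' 1 2 kz by (auto simp: carrier_matD intro!: exI[of _ "transpose_mat k'"])
qed

lemma cond2: assumes x: "x \<in> carrier_mat (Suc n) (Suc n)" and A: "A \<in> carrier_mat n n"
  and AN: "A * upper_left n x = upper_left n x * A"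
  and hv: "A *\<^sub>v vec n (\<lambda>i. x $$ (i,n)) = 0\<^sub>v n"
  and hw: "transpose_mat A *\<^sub>v vec n (\<lambda>i. x $$ (n,i)) = 0\<^sub>v n"
  shows "embed_gl n A \<in> centralizer (Suc n) x"
proof -
  let ?Y = "embed_gl n A"
  let ?N = "upper_left n x"
  have Yc: "?Y \<in> carrier_mat (Suc n) (Suc n)" by (simp add: embed_gl_def)
  have Nc: "?N \<in> carrier_mat n n" by (simp add: upper_left_def)
  have Yidx: "?Y $$ (i,j) = (if i < n \<and> j < n then A $$ (i,j) else 0)" if "i < Suc n" "j < Suc n" for i j
    using that by (simp add: embed_gl_def)
  have Nidx: "?N $$ (i,j) = x $$ (i,j)" if "i < n" "j < n" for i j using that by (simp add: upper_left_def)
  have e1: "(?Y * x) $$ (i,j) = (if i < n then (\<Sum>l<n. A $$ (i,l) * x $$ (l,j)) else 0)" if ij: "i < Suc n" "j < Suc n" for i j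
  proof -
    have "(?Y * x) $$ (i,j) = (\<Sum>l<Suc n. ?Y $$ (i,l) * x $$ (l,j))" by (rule mult_entry[OF Yc x ij])
    also have "\<dots> = (\<Sum>l<n. ?Y $$ (i,l) * x $$ (l,j))" using ij by (simp add: Yidx)
    also have "\<dots> = (if i < n then (\<Sum>l<n. A $$ (i,l) * x $$ (l,j)) else 0)"
      using ij by (auto simp: Yidx intro!: sum.cong)
    finally show ?thesis .
  qed
  have e2: "(x * ?Y) $$ (i,j) = (if j < n then (\<Sum>l<n. x $$ (i,l) * A $$ (l,j)) else 0)" if ij: "i < Suc n" "j < Suc n" for i j
  proof -
    have "(x * ?Y) $$ (i,j) = (\<Sum>l<n. x $$ (i,l) * ?Y $$ (l,j))" by (rule mult_entry_Suc[OF x Yc ij]) (simp add: Yidx ij)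
    also have "\<dots> = (if j < n then (\<Sum>l<n. x $$ (i,l) * A $$ (l,j)) else 0)"
      using ij by (auto simp: Yidx intro!: sum.cong)
    finally show ?thesis .
  qed
  have eq: "(?Y * x) $$ (i,j) = (x * ?Y) $$ (i,j)" if ij: "i < Suc n" "j < Suc n" for i j
  proof (cases "i < n")
    case True note i = True
    show ?thesis
    proof (cases "j < n")
      case True
      have "(\<Sum>l<n. A $$ (i,l) * x $$ (l,j)) = (A * ?N) $$ (i,j)"
        using mult_entry[OF A Nc i True] i True by (simp add: Nidx)
      moreover have "(\<Sum>l<n. x $$ (i,l) * A $$ (l,j)) = (?N * A) $$ (i,j)"
        using mult_entry[OF Nc A i True] i True by (simp add: Nidx)
      ultimately show ?thesis using e1[OF ij] e2[OF ij] i True AN by simp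
    next
      case False hence jn: "j = n" using ij by simp
      have "(\<Sum>l<n. A $$ (i,l) * x $$ (l,j)) = (A *\<^sub>v vec n (\<lambda>i. x $$ (i,n))) $ i"
        using mv_entry[OF A _ i, of "vec n (\<lambda>i. x $$ (i,n))"] jn by simp
      thus ?thesis using e1[OF ij] e2[OF ij] i False hv by simp
    qed
  next
    case False hence iN: "i = n" using ij by simp
    show ?thesis
    proof (cases "j < n")
      case True
      have "(\<Sum>l<n. x $$ (i,l) * A $$ (l,j)) = (transpose_mat A *\<^sub>v vec n (\<lambda>i. x $$ (n,i))) $ j"
        using mv_entry[of "transpose_mat A" n n "vec n (\<lambda>i. x $$ (n,i))" j] A True iN
        by (simp add: mult.commute)
      thus ?thesis using e1[OF ij] e2[OF ij] False True hw by simp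
    next
      case False thus ?thesis using e1[OF ij] e2[OF ij] \<open>\<not> i < n\<close> by simp
    qed
  qed
  have "lie_bracket ?Y x = 0\<^sub>m (Suc n) (Suc n)"
  proof (rule eq_matI)
    fix i j assume "i < dim_row (0\<^sub>m (Suc n) (Suc n))" "j < dim_col (0\<^sub>m (Suc n) (Suc n))"
    hence ij: "i < Suc n" "j < Suc n" by auto
    show "lie_bracket ?Y x $$ (i,j) = 0\<^sub>m (Suc n) (Suc n) $$ (i,j)"
      unfolding lie_bracket_def using eq[OF ij] ij Yc x by (simp add: carrier_matD)
  qed (use Yc x in \<open>auto simp: lie_bracket_def carrier_matD\<close>)
  thus ?thesis unfolding centralizer_def using Yc by simp
qed



lemma w0w0: "X \<in> carrier_mat m m \<Longrightarrow> w0 m * (w0 m * X) = X"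
proof -
  assume X: "X \<in> carrier_mat m m"
  have "w0 m * (w0 m * X) = (w0 m * w0 m) * X" by (rule assoc_mult_mat[symmetric]) (use X in auto)
  thus ?thesis using w0_sq X by simp
qed

lemma tc_car[simp]: "(A :: complex mat) \<in> carrier_mat a c \<Longrightarrow> transpose_mat A \<in> carrier_mat c a"
  by auto

theorem proposition3p10:
  fixes n :: nat and x :: "complex mat" and b :: "complex mat set"
  assumes "n \<ge> 1"
    and "x \<in> carrier_mat (Suc n) (Suc n)"
    and "regular_nilpotent (Suc n) x"
    and "regular_nilpotent n (upper_left n x)"
    and "embed_gl n ` centralizer n (upper_left n x) \<inter> centralizer (Suc n) x = {0\<^sub>m (Suc n) (Suc n)}"
    and "borel_subalg (Suc n) b" and "x \<in> b"
  shows "b \<in> Q_plus n \<or> b \<in> Q_minus n"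
proof -
  note n1 = assms(1) and x = assms(2) and Rx = assms(3) and RN = assms(4) and C = assms(5)
    and B = assms(6) and xb = assms(7)
  define N where "N = upper_left n x"
  have Nc: "N \<in> carrier_mat n n" by (simp add: N_def upper_left_def)
  have NP: "N ^\<^sub>m (n - 1) \<noteq> 0\<^sub>m n n" using reg_pow[OF RN n1] by (simp add: N_def)
  have Nn: "N ^\<^sub>m n = 0\<^sub>m n n" using nil_pow RN unfolding regular_nilpotent_def N_def by blast
  have xn: "x ^\<^sub>m Suc n = 0\<^sub>m (Suc n) (Suc n)" using nil_pow Rx unfolding regular_nilpotent_def by blast
  define A where "A = N ^\<^sub>m (n - 1)"
  have Ac: "A \<in> carrier_mat n n" using Nc by (simp add: A_def)
  have AN: "A * N = N * A" unfolding A_def by (rule pow_mat_comm[OF Nc])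
  define v where "v = vec n (\<lambda>i. x $$ (i,n))"
  define w where "w = vec n (\<lambda>i. x $$ (n,i))"
  show ?thesis
  proof (cases "A *\<^sub>v v = 0\<^sub>v n")
    case False
    have "\<exists>k k'. k \<in> K_grp n \<and> k' \<in> carrier_mat (Suc n) (Suc n) \<and> k * k' = 1\<^sub>m (Suc n) \<and> k' * k = 1\<^sub>m (Suc n)
      \<and> k' * x * k = JJ (Suc n)"
      by (rule krylov[OF n1 x xn]) (use Nn False in \<open>simp_all add: N_def A_def v_def\<close>)
    then obtain k k' where kk: "k \<in> K_grp n" "k' \<in> carrier_mat (Suc n) (Suc n)" "k * k' = 1\<^sub>m (Suc n)"
      "k' * k = 1\<^sub>m (Suc n)" "k' * x * k = JJ (Suc n)" by blast
    have kc: "k \<in> carrier_mat (Suc n) (Suc n)" using kk(1) by (simp add: K_grp_def)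
    have "b = (\<lambda>A. k * A * k') ` upper_borel (Suc n)" by (rule FIN[OF B xb kc kk(2,3,4,5)])
    hence "b = {k * A * k' | A. A \<in> upper_borel (Suc n)}" by (simp add: Setcompr_eq_image)
    hence "b \<in> Q_plus n" unfolding Q_plus_def K_orbit_def using kk by blast
    thus ?thesis by simp
  next
    case True note hv = True
    show ?thesis
    proof (cases "transpose_mat A *\<^sub>v w = 0\<^sub>v n")
      case True
      have "embed_gl n A \<in> centralizer (Suc n) x"
        by (rule cond2[OF x Ac]) (use AN hv True in \<open>simp_all add: N_def v_def w_def\<close>)
      moreover have "A \<in> centralizer n N" unfolding centralizer_def lie_bracket_def using Ac AN Nc by simp
      ultimately have "embed_gl n A \<in> {0\<^sub>m (Suc n) (Suc n)}" using C unfolding N_def by blast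
      hence E0: "embed_gl n A = 0\<^sub>m (Suc n) (Suc n)" by simp
      have "A = 0\<^sub>m n n"
      proof (rule eq_matI)
        fix i j assume "i < dim_row (0\<^sub>m n n)" "j < dim_col (0\<^sub>m n n)"
        hence ij: "i < n" "j < n" by auto
        have "embed_gl n A $$ (i,j) = A $$ (i,j)" using ij by (simp add: embed_gl_def)
        thus "A $$ (i,j) = 0\<^sub>m n n $$ (i,j)" using E0 ij by simp
      qed (use Ac in auto)
      thus ?thesis using NP A_def by simp
    next
      case False
      define xt where "xt = transpose_mat x"
      have xtc: "xt \<in> carrier_mat (Suc n) (Suc n)" using x by (simp add: xt_def)
      have xtn: "xt ^\<^sub>m Suc n = 0\<^sub>m (Suc n) (Suc n)" using transpose_pow[OF x, of "Suc n"] xn by (simp add: xt_def)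
      have ult: "upper_left n xt = transpose_mat N"
        by (rule eq_matI) (use x in \<open>auto simp: xt_def N_def upper_left_def\<close>)
      have ultn: "upper_left n xt ^\<^sub>m n = 0\<^sub>m n n" using ult transpose_pow[OF Nc, of n] Nn by simp
      have vt: "vec n (\<lambda>i. xt $$ (i, n)) = w" using x by (intro eq_vecI) (auto simp: xt_def w_def)
      have cyc: "upper_left n xt ^\<^sub>m (n - 1) *\<^sub>v vec n (\<lambda>i. xt $$ (i, n)) \<noteq> 0\<^sub>v n"
        using False ult vt transpose_pow[OF Nc, of "n - 1"] by (simp add: A_def)
      have "\<exists>k k'. k \<in> K_grp n \<and> k' \<in> carrier_mat (Suc n) (Suc n) \<and> k * k' = 1\<^sub>m (Suc n) \<and> k' * k = 1\<^sub>m (Suc n)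
        \<and> k' * xt * k = JJ (Suc n)" by (rule krylov[OF n1 xtc xtn ultn cyc])
      then obtain k k' where kk: "k \<in> K_grp n" "k' \<in> carrier_mat (Suc n) (Suc n)" "k * k' = 1\<^sub>m (Suc n)"
        "k' * k = 1\<^sub>m (Suc n)" "k' * xt * k = JJ (Suc n)" by blast
      have kc: "k \<in> carrier_mat (Suc n) (Suc n)" using kk(1) by (simp add: K_grp_def)
      have ktc: "transpose_mat k \<in> carrier_mat (Suc n) (Suc n)" using kc by simp
      have k'tc: "transpose_mat k' \<in> carrier_mat (Suc n) (Suc n)" using kk(2) by simp
      have e: "transpose_mat k * x * transpose_mat k' = transpose_mat (JJ (Suc n))"
      proof -
        have "transpose_mat (k' * xt * k) = transpose_mat k * transpose_mat (k' * xt)"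
          by (rule transpose_mult) (use kk(2) xtc kc in auto)
        also have "transpose_mat (k' * xt) = transpose_mat xt * transpose_mat k'"
          by (rule transpose_mult) (use kk(2) xtc in auto)
        also have "transpose_mat xt = x" by (simp add: xt_def)
        finally have "transpose_mat (k' * xt * k) = transpose_mat k * (x * transpose_mat k')" .
        moreover have "transpose_mat k * x * transpose_mat k' = transpose_mat k * (x * transpose_mat k')"
          by (rule assoc_mult_mat) (use ktc k'tc x in auto)
        ultimately show ?thesis using kk(5) by simp
      qed
      have tkk': "transpose_mat k' * transpose_mat k = 1\<^sub>m (Suc n)"
        using transpose_mult[OF kc kk(2)] kk(3) by simp
      have tk'k: "transpose_mat k * transpose_mat k' = 1\<^sub>m (Suc n)"
        using transpose_mult[OF kk(2) kc] kk(4) by simp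
      have as: "\<And>P Q R. P \<in> carrier_mat (Suc n) (Suc n) \<Longrightarrow> Q \<in> carrier_mat (Suc n) (Suc n) \<Longrightarrow>
        R \<in> carrier_mat (Suc n) (Suc n) \<Longrightarrow> P * Q * R = P * (Q * R)" by (rule assoc_mult_mat)
      define g where "g = transpose_mat k' * w0 (Suc n)"
      define g' where "g' = w0 (Suc n) * transpose_mat k"
      have gc: "g \<in> carrier_mat (Suc n) (Suc n)" using k'tc by (simp add: g_def)
      have g'c: "g' \<in> carrier_mat (Suc n) (Suc n)" using ktc by (simp add: g'_def)
      have gg': "g * g' = 1\<^sub>m (Suc n)"
      proof -
        have "g * g' = transpose_mat k' * (w0 (Suc n) * (w0 (Suc n) * transpose_mat k))"
          unfolding g_def g'_def using k'tc ktc by (simp add: as)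
        also have "\<dots> = 1\<^sub>m (Suc n)" using w0w0[OF ktc] tkk' by simp
        finally show ?thesis .
      qed
      have g'g: "g' * g = 1\<^sub>m (Suc n)"
      proof -
        have "g' * g = w0 (Suc n) * ((transpose_mat k * transpose_mat k') * w0 (Suc n))"
          unfolding g_def g'_def using k'tc ktc by (simp add: as)
        also have "\<dots> = 1\<^sub>m (Suc n)" using tk'k w0_sq by simp
        finally show ?thesis .
      qed
      have gJ: "g' * x * g = JJ (Suc n)"
      proof -
        have "g' * x * g = w0 (Suc n) * (transpose_mat k * x * transpose_mat k') * w0 (Suc n)"
          unfolding g_def g'_def using k'tc ktc x by (simp add: as)
        also have "\<dots> = JJ (Suc n)" unfolding e by (rule w0_JJ)
        finally show ?thesis .
      qed
      have "b = (\<lambda>A. g * A * g') ` upper_borel (Suc n)" by (rule FIN[OF B xb gc g'c gg' g'g gJ])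
      also have "\<dots> = (\<lambda>A. transpose_mat k' * A * transpose_mat k) ` ((\<lambda>A. w0 (Suc n) * A * w0 (Suc n)) ` upper_borel (Suc n))"
        unfolding image_image
      proof (rule image_cong[OF refl])
        fix A assume "A \<in> upper_borel (Suc n)"
        hence Acar: "A \<in> carrier_mat (Suc n) (Suc n)" by (simp add: upper_borel_def)
        show "g * A * g' = transpose_mat k' * (w0 (Suc n) * A * w0 (Suc n)) * transpose_mat k"
          unfolding g_def g'_def using Acar k'tc ktc by (simp add: as)
      qed
      also have "\<dots> = (\<lambda>A. transpose_mat k' * A * transpose_mat k) ` lower_borel (Suc n)" by (simp only: w0_U)
      finally have "b = {transpose_mat k' * A * transpose_mat k | A. A \<in> lower_borel (Suc n)}"
        by (simp add: Setcompr_eq_image)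
      moreover have K': "transpose_mat k' \<in> K_grp n"
        by (rule K_transpose[OF K_inv[OF kk(1) kk(2) kk(3) kk(4)] kc kk(4) kk(3)])
      ultimately have "b \<in> Q_minus n" unfolding Q_minus_def K_orbit_def using ktc tkk' tk'k by blast
      thus ?thesis by simp
    qed
  qed
qed



end
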